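(* Let $c>0$, $s_1>s_0\geqslant 2$, let $h$ be a sufficiently regular function and let $v$ be a sufficiently smooth solution in $\mathcal{K}_{[s_0,s_1]}$, vanishing near the light cone $\partial\mathcal{K}=\{r=t-1\}$, of the Klein-Gordon equation \[ \Box v - h\,\partial_t v + c^2 v = f . \] Suppose that $|(t/s)h|\leqslant c$ at every $(t,x)\in\mathcal{K}_{[s_0,s_1]}$, and that there exists a function $S$ with $S(t,x)+(t/s)h(t,x)\leqslant 0$ for all $(t,x)\in\mathcal{K}_{[s_0,s_1]}$ and \[ \int_{\lambda_0}^{s_1}\big|S|_{\gamma_{t,x}}(\lambda)\big|\,d\lambda\leqslant C_S \] with $C_S$ a constant. Then for any $\eta\in\mathbb{R}$ and all $(t,x)\in\mathcal{K}_{[s_0,s_1]}$, \[ (s/t)^{\eta}s^{3/2}\big(|v(t,x)|+(s/t)|\partial v(t,x)|\big)\leqslant C\,V(t,x), \] where $C$ is a constant determined by $(c,C_S,s_0)$, and \[ V(t,x)=\begin{cases} (s/t)^{\eta}\sup_{\mathcal{H}_{s_0}}(|v|+|\partial v|)+(s/t)^{\eta}s^{1/2}|v|_1(t,x)+(s/t)^{\eta}\displaystyle\int_{\lambda_0}^{s}\big|R[h,v]+\tau^{3/2}f\big|\Big|_{\gamma_{t,x}(\tau)}d\tau, & 0\leqslant r/t\leqslant \frac{s_0^2-1}{s_0^2+1},\\[2mm] (s/t)^{\eta}s^{1/2}|v|_1(t,x)+(s/t)^{\eta}\displaystyle\int_{\lambda_0}^{s}\big|R[h,v]+\tau^{3/2}f\big|\Big|_{\gamma_{t,x}(\tau)}d\tau,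 & \frac{s_0^2-1}{s_0^2+1}\leqslant r/t<1, \end{cases} \] with \[ \lambda_0=\begin{cases} s_0, & 0\leqslant r/t\leqslant \frac{s_0^2-1}{s_0^2+1},\\ \sqrt{\frac{t+r}{t-r}}, & \frac{s_0^2-1}{s_0^2+1}\leqslant r/t<1,\end{cases} \] and \[ R[h,v]=s^{3/2}\Big(\frac{x^ax^b}{s^2}\bar\partial_a\bar\partial_b v+\sum_a\bar\partial_a\bar\partial_a v+\frac{3x^a}{s^2}\bar\partial_a v+\frac{3}{4s^2}v\Big)-\frac32 s^{1/2}hv-s^{1/2}(x^a/s)\,h\,L_a v . \]
   Context: Minkowski space $\mathbb{R}^{1+3}$ with coordinates $(t,x)$, $r=|x|$, $\Box=\partial_t^2-\Delta$, $s=\sqrt{t^2-r^2}$. $\mathcal{K}=\{(t,x): r<t-1\}$, $\mathcal{H}_s=\{t=\sqrt{s^2+r^2}\}$, and $\mathcal{K}_{[s_0,s_1]}=\{(t,x): s_0^2\leqslant t^2-r^2\leqslant s_1^2,\ r<t-1\}$. Hyperbolic derivatives: $\bar\partial_a=(x^a/t)\partial_t+\partial_a$ ($a=1,2,3$). Lorentz boosts $L_a=x^a\partial_t+t\partial_a$. $|\partial v|=\max_{\alpha}|\partial_\alpha v|$ over $\alpha\in\{0,1,2,3\}$, and $|v|_1=\max|Zv|$ over all operators $Z$ of order at most $1$ among the identity, $\partial_\alpha$ and $L_a$. The curve $\gamma_{t,x}(\lambda)=(\lambda t/s,\lambda x/s)$ is the ray through the origin passing through $(t,x)$ at $\lambda=s$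 (integral curve of $\bar\partial_s+(x^a/s)\bar\partial_a$ with $\bar\partial_s=(s/t)\partial_t$); quantities with $|_{\gamma_{t,x}(\tau)}$ are evaluated at the point $\gamma_{t,x}(\tau)$, with $s$ there equal to $\tau$. Repeated indices are summed. *)

theory Defs
  imports "HOL-Analysis.Analysis"
begin

type_synonym pt = "real \<times> (real^3)"

definition tco :: "pt \<Rightarrow> real" where "tco p = fst p"
definition xco :: "pt \<Rightarrow> real^3" where "xco p = snd p"
definition rco :: "pt \<Rightarrow> real" where "rco p = norm (snd p)"
definition sco :: "pt \<Rightarrow> real" where "sco p = sqrt ((fst p)^2 - (norm (snd p))^2)"

definition pd :: "(pt \<Rightarrow> real) \<Rightarrow> pt \<Rightarrow> pt \<Rightarrow> real" where
  "pd w e p = deriv (\<lambda>y. w (p + y *\<^sub>R e)) 0"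

definition et :: pt where "et = (1, 0)"
definition ex :: "3 \<Rightarrow> pt" where "ex a = (0, axis a 1)"

definition dt :: "(pt \<Rightarrow> real) \<Rightarrow> pt \<Rightarrow> real" where "dt w = pd w et"
definition dx :: "3 \<Rightarrow> (pt \<Rightarrow> real) \<Rightarrow> pt \<Rightarrow> real" where "dx a w = pd w (ex a)"

definition dbar :: "3 \<Rightarrow> (pt \<Rightarrow> real) \<Rightarrow> pt \<Rightarrow> real" where
  "dbar a w p = (xco p $ a / tco p) * dt w p + dx a w p"
definition Lb :: "3 \<Rightarrow> (pt \<Rightarrow> real) \<Rightarrow> pt \<Rightarrow> real" where
  "Lb a w p = xco p $ a * dt w p + tco p * dx a w p"

definition box :: "(pt \<Rightarrow> real) \<Rightarrow> pt \<Rightarrow> real" where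
  "box w p = dt (dt w) p - (\<Sum>a\<in>UNIV. dx a (dx a w) p)"

definition absD :: "(pt \<Rightarrow> real) \<Rightarrow> pt \<Rightarrow> real" where
  "absD w p = Max ({\<bar>dt w p\<bar>} \<union> (\<lambda>a. \<bar>dx a w p\<bar>) ` UNIV)"

definition abs1 :: "(pt \<Rightarrow> real) \<Rightarrow> pt \<Rightarrow> real" where
  "abs1 w p = Max ({\<bar>w p\<bar>, \<bar>dt w p\<bar>} \<union> (\<lambda>a. \<bar>dx a w p\<bar>) ` UNIV
                   \<union> (\<lambda>a. \<bar>Lb a w p\<bar>) ` UNIV)"

definition C2_on :: "pt set \<Rightarrow> (pt \<Rightarrow> real) \<Rightarrow> bool" where
  "C2_on U w \<longleftrightarrow> open U \<and> w differentiable_on U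
     \<and> (\<forall>e. (\<lambda>p. pd w e p) differentiable_on U)
     \<and> (\<forall>e e'. continuous_on U (\<lambda>p. pd (\<lambda>q. pd w e q) e' p))"

definition Kreg :: "real \<Rightarrow> real \<Rightarrow> pt set" where
  "Kreg s0 s1 = {(t, x). s0^2 \<le> t^2 - (norm x)^2 \<and> t^2 - (norm x)^2 \<le> s1^2 \<and> norm x < t - 1}"

definition HypK :: "real \<Rightarrow> pt set" where
  "HypK s = {(t, x). t = sqrt (s^2 + (norm x)^2) \<and> norm x < t - 1}"

definition gam :: "pt \<Rightarrow> real \<Rightarrow> pt" where
  "gam p l = (l / sco p) *\<^sub>R p"

definition lam0 :: "real \<Rightarrow> pt \<Rightarrow> real" where
  "lam0 s0 p = (if rco p / tco p \<le> (s0^2 - 1) / (s0^2 + 1) then s0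
               else sqrt ((tco p + rco p) / (tco p - rco p)))"

definition Rhv :: "(pt \<Rightarrow> real) \<Rightarrow> (pt \<Rightarrow> real) \<Rightarrow> pt \<Rightarrow> real" where
  "Rhv h v p = (let s = sco p; x = xco p in
     s powr (3/2) * ((\<Sum>a\<in>UNIV. \<Sum>b\<in>UNIV. x$a * x$b / s^2 * dbar a (dbar b v) p)
        + (\<Sum>a\<in>UNIV. dbar a (dbar a v) p)
        + (\<Sum>a\<in>UNIV. 3 * x$a / s^2 * dbar a v p)
        + 3 / (4 * s^2) * v p)
     - 3/2 * s powr (1/2) * h p * v p
     - s powr (1/2) * (\<Sum>a\<in>UNIV. (x$a / s) * h p * Lb a v p))"

definition Vbd :: "real \<Rightarrow> real \<Rightarrow> (pt \<Rightarrow> real) \<Rightarrow> (pt \<Rightarrow> real) \<Rightarrow> (pt \<Rightarrow> real) \<Rightarrow> pt \<Rightarrow> real" where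
  "Vbd s0 eta h v f p = (let s = sco p; t = tco p; w = (s / t) powr eta;
     I = integral {lam0 s0 p .. s}
           (\<lambda>\<tau>. \<bar>Rhv h v (gam p \<tau>) + \<tau> powr (3/2) * f (gam p \<tau>)\<bar>)
   in (if rco p / tco p \<le> (s0^2 - 1) / (s0^2 + 1)
       then w * (SUP q\<in>HypK s0. \<bar>v q\<bar> + absD v q) + w * s powr (1/2) * abs1 v p + w * I
       else w * s powr (1/2) * abs1 v p + w * I))"

end

theory Submission
  imports Defs
begin

lemma line_has_deriv:
  assumes "(f has_derivative F) (at q)"
  shows "((\<lambda>y. f (q + y *\<^sub>R e)) has_real_derivative F e) (at 0)"
proof -
  have l: "((\<lambda>y::real. q + y *\<^sub>R e) has_derivative (\<lambda>y. y *\<^sub>R e)) (at 0)"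
    by (auto intro!: derivative_eq_intros)
  have "((\<lambda>y. f (q + y *\<^sub>R e)) has_derivative (\<lambda>y. F (y *\<^sub>R e))) (at 0)"
    using has_derivative_compose[OF l, of f F] assms by simp
  moreover have "(\<lambda>y. F (y *\<^sub>R e)) = (\<lambda>y. y * F e)"
    using assms has_derivative_bounded_linear linear_simps(5)
    by (metis bounded_linear.linear real_scaleR_def)
  ultimately have "((\<lambda>y. f (q + y *\<^sub>R e)) has_derivative (\<lambda>y. F e * y)) (at 0)"
    by (simp add: mult.commute)
  then show ?thesis
    by (simp add: has_field_derivative_def)
qed

lemma pd_has_derivative:
  assumes "(f has_derivative F) (at q)"
  shows "pd f e q = F e"
  unfolding pd_def using line_has_deriv[OF assms] DERIV_imp_deriv by blast

lemma pd_frechet: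
  assumes "f differentiable (at q)"
  shows "pd f e q = frechet_derivative f (at q) e"
  using assms pd_has_derivative frechet_derivative_works by blast

lemma line_deriv:
  assumes "f differentiable (at q)"
  shows "((\<lambda>y. f (q + y *\<^sub>R e)) has_real_derivative pd f e q) (at 0)"
  using line_has_deriv[of f "frechet_derivative f (at q)" q e] assms frechet_derivative_works pd_frechet
  by metis

lemma pt_decomp:
  "(e::pt) = fst e *\<^sub>R et + (\<Sum>a\<in>UNIV. (snd e $ a) *\<^sub>R ex a)"
proof -
  have s: "snd (\<Sum>a\<in>UNIV. (snd e $ a) *\<^sub>R ex a) = snd e"
    using basis_expansion[of "snd e"] by (simp add: snd_sum ex_def scalar_mult_eq_scaleR)
  have f: "fst (\<Sum>a\<in>UNIV. (snd e $ a) *\<^sub>R ex a) = 0"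
    by (simp add: fst_sum ex_def)
  show ?thesis by (rule prod_eqI) (simp_all add: s f et_def)
qed

lemma pd_lin:
  assumes "f differentiable (at q)"
  shows "pd f e q = fst e * dt f q + (\<Sum>a\<in>UNIV. snd e $ a * dx a f q)"
proof -
  let ?F = "frechet_derivative f (at q)"
  have lin: "linear ?F"
    using assms frechet_derivative_works has_derivative_linear by blast
  have "?F e = ?F (fst e *\<^sub>R et + (\<Sum>a\<in>UNIV. (snd e $ a) *\<^sub>R ex a))"
    using pt_decomp by metis
  also have "\<dots> = fst e * ?F et + (\<Sum>a\<in>UNIV. snd e $ a * ?F (ex a))"
    using lin by (simp add: linear_add linear_sum linear_scale)
  finally show ?thesis
    using assms by (simp add: pd_frechet dt_def dx_def)
qed

lemma ray_deriv:
  assumes "f differentiable (at (\<tau> *\<^sub>R e))"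
  shows "((\<lambda>\<tau>. f (\<tau> *\<^sub>R e)) has_real_derivative pd f e (\<tau> *\<^sub>R e)) (at \<tau>)"
proof -
  have "((\<lambda>y. f (\<tau> *\<^sub>R e + y *\<^sub>R e)) has_real_derivative pd f e (\<tau> *\<^sub>R e)) (at 0)"
    using line_deriv[OF assms] .
  then have "((\<lambda>y. f ((\<tau> + y) *\<^sub>R e)) has_real_derivative pd f e (\<tau> *\<^sub>R e)) (at 0)"
    by (simp add: scaleR_add_left)
  then show ?thesis
    using DERIV_shift[of "\<lambda>u. f (u *\<^sub>R e)" "pd f e (\<tau> *\<^sub>R e)" 0 \<tau>]
    by (simp add: add.commute)
qed

lemma pd_local:
  assumes "open U" "q \<in> U" "\<And>y. y \<in> U \<Longrightarrow> f y = g y"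
  shows "pd f e q = pd g e q"
  unfolding pd_def
proof (rule deriv_cong_ev)
  have "open ((\<lambda>y::real. q + y *\<^sub>R e) -` U)"
    by (rule open_vimage[OF assms(1)]) (intro continuous_intros)
  moreover have "0 \<in> (\<lambda>y::real. q + y *\<^sub>R e) -` U" using assms(2) by simp
  ultimately have "\<forall>\<^sub>F y in nhds 0. y \<in> (\<lambda>y::real. q + y *\<^sub>R e) -` U"
    by (rule eventually_nhds_in_open)
  then have "\<forall>\<^sub>F y in nhds 0. q + y *\<^sub>R e \<in> U" by simp
  then show "\<forall>\<^sub>F y in nhds 0. f (q + y *\<^sub>R e) = g (q + y *\<^sub>R e)"
    by eventually_elim (use assms(3) in auto)
qed auto

lemma pd_dbar:
  assumes "dt v differentiable (at q)" "dx b v differentiable (at q)" "tco q \<noteq> 0"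
  shows "pd (dbar b v) e q = ((snd e $ b * tco q - xco q $ b * fst e) / (tco q)^2) * dt v q
            + (xco q $ b / tco q) * pd (dt v) e q + pd (dx b v) e q"
proof -
  have h1: "((\<lambda>y. dt v (q + y *\<^sub>R e)) has_real_derivative pd (dt v) e q) (at 0)"
    by (rule line_deriv[OF assms(1)])
  have h2: "((\<lambda>y. dx b v (q + y *\<^sub>R e)) has_real_derivative pd (dx b v) e q) (at 0)"
    by (rule line_deriv[OF assms(2)])
  have h3: "((\<lambda>y. (xco q $ b + y * snd e $ b) / (tco q + y * fst e)) has_real_derivative
        (snd e $ b * tco q - xco q $ b * fst e)/(tco q)^2) (at 0)"
    using assms(3) by (auto intro!: derivative_eq_intros simp: field_simps power2_eq_square)
  have eq: "(\<lambda>y. dbar b v (q + y *\<^sub>R e)) = (\<lambda>y. (xco q $ b + y * snd e $ b) / (tco q + y * fst e)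
       * dt v (q + y *\<^sub>R e) + dx b v (q + y *\<^sub>R e))"
    by (auto simp: dbar_def xco_def tco_def)
  have "((\<lambda>y. dbar b v (q + y *\<^sub>R e)) has_real_derivative
      ((snd e $ b * tco q - xco q $ b * fst e)/(tco q)^2) * dt v q
      + (xco q $ b / tco q) * pd (dt v) e q + pd (dx b v) e q) (at 0)"
    unfolding eq using DERIV_add[OF DERIV_mult[OF h3 h1] h2] by (simp add: mult.commute)
  then show ?thesis
    unfolding pd_def[of "dbar b v"] by (simp add: DERIV_imp_deriv)
qed

lemma dbar2:
  assumes "dt v differentiable (at q)" "dx b v differentiable (at q)" "tco q \<noteq> 0"
  shows "dbar a (dbar b v) q = (xco q $ a / tco q) * ( - xco q $ b / (tco q)^2 * dt v q
       + (xco q $ b / tco q) * dt (dt v) q + dt (dx b v) q)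
       + ((if a = b then 1 else 0) / tco q) * dt v q + (xco q $ b / tco q) * dx a (dt v) q + dx a (dx b v) q"
proof -
  have "dt (dbar b v) q = pd (dbar b v) et q" by (simp add: dt_def)
  also have "\<dots> = - xco q $ b / (tco q)^2 * dt v q
       + (xco q $ b / tco q) * dt (dt v) q + dt (dx b v) q"
    using pd_dbar[OF assms, of et] by (simp add: et_def dt_def)
  finally have A: "dt (dbar b v) q = - xco q $ b / (tco q)^2 * dt v q
       + (xco q $ b / tco q) * dt (dt v) q + dt (dx b v) q" .
  have "dx a (dbar b v) q = pd (dbar b v) (ex a) q" by (simp add: dx_def)
  also have "\<dots> = ((if a = b then 1 else 0) / tco q) * dt v q + (xco q $ b / tco q) * dx a (dt v) q + dx a (dx b v) q"
    using pd_dbar[OF assms, of "ex a"] assms(3)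
    by (simp add: ex_def dx_def axis_def power2_eq_square)
  finally have B: "dx a (dbar b v) q = ((if a = b then 1 else 0) / tco q) * dt v q + (xco q $ b / tco q) * dx a (dt v) q + dx a (dx b v) q" .
  show ?thesis unfolding dbar_def[of a "dbar b v"] A B by simp
qed

lemma pd2_lin:
  assumes "open U" "q \<in> U" "\<And>y. y \<in> U \<Longrightarrow> v differentiable (at y)"
    "dt v differentiable (at q)" "\<And>a. dx a v differentiable (at q)"
  shows "pd (pd v e) e q = fst e * (fst e * dt (dt v) q + (\<Sum>b\<in>UNIV. snd e $ b * dx b (dt v) q))
     + (\<Sum>a\<in>UNIV. snd e $ a * (fst e * dt (dx a v) q + (\<Sum>b\<in>UNIV. snd e $ b * dx b (dx a v) q)))"
proof -
  have "pd (pd v e) e q = pd (\<lambda>y. fst e * dt v y + (\<Sum>a\<in>UNIV. snd e $ a * dx a v y)) e q"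
    by (rule pd_local[OF assms(1,2)]) (simp add: pd_lin assms(3))
  also have "\<dots> = fst e * pd (dt v) e q + (\<Sum>a\<in>UNIV. snd e $ a * pd (dx a v) e q)"
  proof -
    have "((\<lambda>y. fst e * dt v (q + y *\<^sub>R e) + (\<Sum>a\<in>UNIV. snd e $ a * dx a v (q + y *\<^sub>R e)))
       has_real_derivative fst e * pd (dt v) e q + (\<Sum>a\<in>UNIV. snd e $ a * pd (dx a v) e q)) (at 0)"
      by (intro DERIV_add DERIV_cmult DERIV_sum line_deriv assms(4,5))
    then show ?thesis unfolding pd_def[of "\<lambda>y. _ y + _ y"] by (simp add: DERIV_imp_deriv)
  qed
  also have "\<dots> = fst e * (fst e * dt (dt v) q + (\<Sum>b\<in>UNIV. snd e $ b * dx b (dt v) q))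
     + (\<Sum>a\<in>UNIV. snd e $ a * (fst e * dt (dx a v) q + (\<Sum>b\<in>UNIV. snd e $ b * dx b (dx a v) q)))"
    using pd_lin[OF assms(4)] pd_lin[OF assms(5)] by simp
  finally show ?thesis .
qed

lemma norm3_sq: "(norm (x::real^3))^2 = (x$1)^2 + (x$2)^2 + (x$3)^2"
proof -
  have "(norm x)^2 = inner x x" by (rule power2_norm_eq_inner)
  also have "\<dots> = (x$1)^2 + (x$2)^2 + (x$3)^2" by (simp add: inner_vec_def sum_3 power2_eq_square)
  finally show ?thesis .
qed

lemma I1_point:
  assumes "open U" "q \<in> U" "\<And>y. y \<in> U \<Longrightarrow> v differentiable (at y)"
    "dt v differentiable (at q)" "\<And>a. dx a v differentiable (at q)" "tco q > 0" "sco q > 0"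
  shows "pd (pd v ((1 / sco q) *\<^sub>R q)) ((1 / sco q) *\<^sub>R q) q + 3 / sco q * pd v ((1 / sco q) *\<^sub>R q) q
    = box v q + (\<Sum>a\<in>UNIV. \<Sum>b\<in>UNIV. xco q$a * xco q$b / (sco q)^2 * dbar a (dbar b v) q)
        + (\<Sum>a\<in>UNIV. dbar a (dbar a v) q)
        + (\<Sum>a\<in>UNIV. 3 * xco q$a / (sco q)^2 * dbar a v q)"
proof -
  define t where "t = tco q"
  define \<tau> where "\<tau> = sco q"
  have tau2: "\<tau>^2 = t^2 - ((xco q$1)^2 + (xco q$2)^2 + (xco q$3)^2)"
  proof -
    have "fst q^2 - (norm (snd q))^2 > 0" using assms(7) by (simp add: sco_def)
    then show ?thesis unfolding \<tau>_def t_def sco_def tco_def xco_def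
      by (simp add: norm3_sq)
  qed
  have D: "\<And>a b. dbar a (dbar b v) q = (xco q $ a / t) * ( - xco q $ b / t^2 * dt v q
       + (xco q $ b / t) * dt (dt v) q + dt (dx b v) q)
       + ((if a = b then 1 else 0) / t) * dt v q + (xco q $ b / t) * dx a (dt v) q + dx a (dx b v) q"
    unfolding t_def using dbar2 assms(4,5,6) by (metis less_irrefl)
  have tpos: "t > 0" "\<tau> > 0" using assms(6,7) t_def \<tau>_def by auto
  define A where "A = inverse t"
  define T where "T = inverse \<tau>"
  have At: "A * t = 1" "T * \<tau> = 1" using tpos by (auto simp: A_def T_def)
  have inv2: "inverse (\<tau>^2) = T^2" "inverse (t^2) = A^2" by (simp_all add: A_def T_def power_inverse)
  have fq: "fst q = t" "snd q = xco q" by (simp_all add: t_def tco_def xco_def)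
  show ?thesis
    apply (simp add: pd2_lin[OF assms(1-5)] pd_lin[OF assms(3)[OF assms(2)]] D sum_3 box_def dbar_def[of _ v] fq flip: \<tau>_def t_def)
    apply (simp only: divide_inverse inv2 flip: A_def T_def)
    using At tau2 by algebra
qed

lemma tau2_lemma:
  assumes "sco q > 0"
  shows "(sco q)^2 = (tco q)^2 - ((xco q$1)^2 + (xco q$2)^2 + (xco q$3)^2)"
proof -
  have "fst q^2 - (norm (snd q))^2 > 0" using assms by (simp add: sco_def)
  then show ?thesis unfolding sco_def tco_def xco_def
    by (simp add: norm3_sq)
qed

lemma powr_facts:
  assumes "(\<tau>::real) > 0"
  shows "\<tau> powr (3/2) = \<tau> * sqrt \<tau>" "\<tau> powr (1/2) = sqrt \<tau>" "\<tau> powr (-1/2) = inverse (sqrt \<tau>)"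
proof -
  show h: "\<tau> powr (1/2) = sqrt \<tau>" using assms by (simp add: powr_half_sqrt)
  have "\<tau> powr (3/2) = \<tau> powr (1 + 1/2)" by simp
  also have "\<dots> = \<tau> powr 1 * \<tau> powr (1/2)" by (rule powr_add)
  also have "\<dots> = \<tau> * \<tau> powr (1/2)" using assms by simp
  finally show "\<tau> powr (3/2) = \<tau> * sqrt \<tau>" using h by simp
  have "\<tau> powr (-1/2) = \<tau> powr (- (1/2))" by simp
  also have "\<dots> = inverse (\<tau> powr (1/2))" by (simp add: powr_minus)
  finally show "\<tau> powr (-1/2) = inverse (sqrt \<tau>)" using h by simp
qed

lemma ode_point:
  assumes "open U" "q \<in> U" "\<And>y. y \<in> U \<Longrightarrow> v differentiable (at y)"
    "dt v differentiable (at q)" "\<And>a. dx a v differentiable (at q)" "tco q > 0" "sco q > 0"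
    "f q = box v q - h q * dt v q + c^2 * v q"
  shows "Rhv h v q + sco q powr (3/2) * f q =
     (3/4 * sco q powr (-1/2) * v q + 3 * sco q powr (1/2) * pd v ((1 / sco q) *\<^sub>R q) q
        + sco q powr (3/2) * pd (pd v ((1 / sco q) *\<^sub>R q)) ((1 / sco q) *\<^sub>R q) q)
     - (tco q / sco q) * h q * (3/2 * sco q powr (1/2) * v q + sco q powr (3/2) * pd v ((1 / sco q) *\<^sub>R q) q)
     + c^2 * (sco q powr (3/2) * v q)
     + 3/2 * (tco q / sco q - 1) * h q * sco q powr (1/2) * v q"
proof -
  define t where "t = tco q"
  define \<tau> where "\<tau> = sco q"
  define e where "e = (1 / sco q) *\<^sub>R q"
  define S where "S = (\<Sum>a\<in>UNIV. \<Sum>b\<in>UNIV. xco q$a * xco q$b / (sco q)^2 * dbar a (dbar b v) q)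
        + (\<Sum>a\<in>UNIV. dbar a (dbar a v) q)
        + (\<Sum>a\<in>UNIV. 3 * xco q$a / (sco q)^2 * dbar a v q)"
  define SL where "SL = (\<Sum>a\<in>UNIV. xco q$a * Lb a v q)"
  define \<phi>1 where "\<phi>1 = pd v e q"
  define \<phi>2 where "\<phi>2 = pd (pd v e) e q"
  have tpos: "t > 0" "\<tau> > 0" using assms(6,7) t_def \<tau>_def by auto
  have I1: "\<phi>2 + 3 / \<tau> * \<phi>1 = box v q + S"
    using I1_point[OF assms(1-7)] unfolding \<phi>1_def \<phi>2_def e_def S_def \<tau>_def by simp
  have fq: "fst q = t" "snd q = xco q" by (simp_all add: t_def tco_def xco_def)
  have phi1: "\<phi>1 = (t * dt v q + (xco q$1 * dx 1 v q + xco q$2 * dx 2 v q + xco q$3 * dx 3 v q)) / \<tau>"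
    unfolding \<phi>1_def e_def using pd_lin[OF assms(3)[OF assms(2)]]
    by (simp add: sum_3 fq flip: \<tau>_def) (simp add: add_divide_distrib)
  have tau2: "\<tau>^2 = t^2 - ((xco q$1)^2 + (xco q$2)^2 + (xco q$3)^2)"
    using tau2_lemma[OF assms(7)] t_def \<tau>_def by simp
  have I2: "dt v q = (t / \<tau>) * \<phi>1 - SL / \<tau>^2"
  proof -
    have "SL = xco q$1 * (xco q$1 * dt v q + t * dx 1 v q) + xco q$2 * (xco q$2 * dt v q + t * dx 2 v q)
         + xco q$3 * (xco q$3 * dt v q + t * dx 3 v q)"
      unfolding SL_def by (simp add: sum_3 Lb_def t_def)
    then show ?thesis unfolding phi1 using tpos tau2
      apply (simp add: field_simps power2_eq_square)
      by algebra
  qed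
  have R: "Rhv h v q = \<tau> powr (3/2) * (S + 3 / (4 * \<tau>^2) * v q) - 3/2 * \<tau> powr (1/2) * h q * v q
      - \<tau> powr (1/2) * (h q / \<tau>) * SL"
  proof -
    have "(\<Sum>a\<in>UNIV. (xco q$a / \<tau>) * h q * Lb a v q) = (h q / \<tau>) * SL"
      unfolding SL_def by (simp add: sum_3 add_divide_distrib algebra_simps)
    then show ?thesis unfolding Rhv_def Let_def S_def \<tau>_def by (simp add: algebra_simps)
  qed
  define \<sigma> where "\<sigma> = sqrt \<tau>"
  have sig: "\<sigma> > 0" "\<sigma>^2 = \<tau>" using tpos by (simp_all add: \<sigma>_def)
  have pw: "\<tau> powr (3/2) = \<tau> * \<sigma>" "\<tau> powr (1/2) = \<sigma>" "\<tau> powr (-1/2) = inverse \<sigma>"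
    using powr_facts[OF tpos(2)] by (simp_all add: \<sigma>_def)
  define T where "T = inverse \<tau>"
  define Si where "Si = inverse \<sigma>"
  have inv: "T * \<tau> = 1" "Si * \<sigma> = 1" using tpos sig by (simp_all add: T_def Si_def)
  have inv2: "inverse (\<tau>^2) = T^2" "inverse (4 * \<tau>^2) = inverse 4 * T^2"
    by (simp_all add: T_def power_inverse)
  have goal: "\<tau> powr (3/2) * (S + 3 / (4 * \<tau>^2) * v q) - 3/2 * \<tau> powr (1/2) * h q * v q
      - \<tau> powr (1/2) * (h q / \<tau>) * SL + \<tau> powr (3/2) * (box v q - h q * ((t / \<tau>) * \<phi>1 - SL / \<tau>^2) + c^2 * v q)
    = (3/4 * \<tau> powr (-1/2) * v q + 3 * \<tau> powr (1/2) * \<phi>1 + \<tau> powr (3/2) * \<phi>2)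
     - (t / \<tau>) * h q * (3/2 * \<tau> powr (1/2) * v q + \<tau> powr (3/2) * \<phi>1)
     + c^2 * (\<tau> powr (3/2) * v q) + 3/2 * (t / \<tau> - 1) * h q * \<tau> powr (1/2) * v q"
    unfolding pw
    apply (simp only: divide_inverse inv2 flip: T_def Si_def)
    using inv sig I1 tau2 unfolding divide_inverse T_def[symmetric]
    by algebra
  show ?thesis
    unfolding R assms(8) I2 using goal by (simp add: t_def \<tau>_def e_def \<phi>1_def \<phi>2_def)
qed

lemma key_ineq:
  fixes g w w1 x a c \<beta> :: real
  assumes "c > 0" "0 < a" "a \<le> x" "0 \<le> \<beta>" "\<beta> \<le> 3/2" "\<bar>g\<bar> \<le> c"
  shows "2 * g * (w1^2 - \<beta> * w * w1 / x) \<le>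
     2 * ((1 + 3/(4*c*a)) * max g 0 + 9/(16*c*x^2)) * (w1^2 + c^2 * w^2)"
proof (cases "g \<le> 0")
  case True
  have x0: "x > 0" using assms by simp
  have sq: "\<beta> * w * w1 / x - w1^2 \<le> \<beta>^2 * w^2 / (4 * x^2)"
  proof -
    have "\<beta> * w * w1 / x - w1^2 = \<beta>^2 * w^2 / (4 * x^2) - (w1 - \<beta> * w / (2*x))^2"
      using x0 by (simp add: power2_eq_square field_simps)
    then show ?thesis by simp
  qed
  have b2: "\<beta>^2 \<le> 9/4"
  proof -
    have "\<beta>^2 \<le> (3/2)^2" using assms(4,5) by (intro power_mono) auto
    then show ?thesis by (simp add: power2_eq_square)
  qed
  have "2 * g * (w1^2 - \<beta> * w * w1 / x) = 2 * (-g) * (\<beta> * w * w1 / x - w1^2)" by (simp add: algebra_simps)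
  also have "\<dots> \<le> 2 * (-g) * (\<beta>^2 * w^2 / (4 * x^2))"
    using sq True by (intro mult_left_mono) auto
  also have "\<dots> \<le> 2 * c * (9/4 * w^2 / (4 * x^2))"
  proof (rule mult_mono)
    show "2 * - g \<le> 2 * c" using assms(6) by simp
    show "\<beta>\<^sup>2 * w\<^sup>2 / (4 * x\<^sup>2) \<le> 9 / 4 * w\<^sup>2 / (4 * x\<^sup>2)"
      using b2 by (intro divide_right_mono mult_right_mono) auto
  qed (use assms x0 in auto)
  also have "\<dots> = 2 * (9/(16*c*x^2)) * (c^2 * w^2)" using assms(1) x0 by (simp add: field_simps power2_eq_square)
  also have "\<dots> \<le> 2 * ((1 + 3/(4*c*a)) * max g 0 + 9/(16*c*x^2)) * (w1^2 + c^2 * w^2)"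
  proof -
    have "max g 0 = 0" using True by simp
    moreover have "9/(16*c*x^2) * (c^2 * w^2) \<le> 9/(16*c*x^2) * (w1^2 + c^2 * w^2)"
      using assms(1) x0 by (intro mult_left_mono) auto
    ultimately show ?thesis by simp
  qed
  finally show ?thesis .
next
  case False
  then have g0: "g > 0" by simp
  have x0: "x > 0" using assms by simp
  have amgm: "\<bar>w\<bar> * \<bar>w1\<bar> \<le> (c^2 * w^2 + w1^2) / (2 * c)"
  proof -
    have "0 \<le> (c * \<bar>w\<bar> - \<bar>w1\<bar>)^2" by simp
    then have "2 * c * (\<bar>w\<bar> * \<bar>w1\<bar>) \<le> c^2 * w^2 + w1^2" by (simp add: power2_eq_square algebra_simps)
    then show ?thesis using assms(1) by (simp add: field_simps)
  qed
  have t1: "- (\<beta> * w * w1 / x) \<le> \<beta> / x * (\<bar>w\<bar> * \<bar>w1\<bar>)"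
  proof -
    have "- (w * w1) \<le> \<bar>w\<bar> * \<bar>w1\<bar>" by (metis abs_ge_minus_self abs_mult)
    then have "\<beta> / x * (- (w * w1)) \<le> \<beta> / x * (\<bar>w\<bar> * \<bar>w1\<bar>)" using assms(4) x0 by (intro mult_left_mono) auto
    then show ?thesis by simp
  qed
  have bx: "\<beta> / x \<le> 3 / (2 * a)"
  proof -
    have "\<beta> / x \<le> (3/2) / a" using frac_le[of "3/2" \<beta> a x] assms by simp
    then show ?thesis by simp
  qed
  have "w1^2 - \<beta> * w * w1 / x \<le> w1^2 + \<beta> / x * (\<bar>w\<bar> * \<bar>w1\<bar>)" using t1 by simp
  also have "\<dots> \<le> w1^2 + 3 / (2 * a) * ((c^2 * w^2 + w1^2) / (2 * c))"
    using amgm bx assms by (intro add_left_mono mult_mono) auto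
  also have "\<dots> \<le> (1 + 3/(4*c*a)) * (w1^2 + c^2 * w^2)"
    using assms by (simp add: field_simps)
  finally have "w1^2 - \<beta> * w * w1 / x \<le> (1 + 3/(4*c*a)) * (w1^2 + c^2 * w^2)" .
  then have "2 * g * (w1^2 - \<beta> * w * w1 / x) \<le> 2 * g * ((1 + 3/(4*c*a)) * (w1^2 + c^2 * w^2))"
    using g0 by (intro mult_left_mono) auto
  also have "\<dots> = 2 * ((1 + 3/(4*c*a)) * max g 0) * (w1^2 + c^2 * w^2)" using g0 by simp
  also have "\<dots> \<le> 2 * ((1 + 3/(4*c*a)) * max g 0 + 9/(16*c*x^2)) * (w1^2 + c^2 * w^2)"
    using assms x0 by (intro mult_right_mono mult_left_mono) auto
  finally show ?thesis .
qed

lemma le_eps_lemma: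
  fixes X Y Z :: real
  assumes "Z > 0" "\<And>\<epsilon>. \<epsilon> > 0 \<Longrightarrow> X \<le> Y + Z * sqrt \<epsilon>"
  shows "X \<le> Y"
proof (rule field_le_epsilon)
  fix e :: real assume e: "e > 0"
  have "X \<le> Y + Z * sqrt ((e/Z)^2)" using assms(2)[of "(e/Z)^2"] e assms(1) by simp
  also have "\<dots> = Y + e" using e assms(1) by simp
  finally show "X \<le> Y + e" .
qed

lemma energy_est:
  fixes w w1 w2 g G :: "real \<Rightarrow> real"
  assumes a0: "0 < a" and ab: "a \<le> b" and c0: "c > 0" and bt: "0 \<le> \<beta>" "\<beta> \<le> 3/2"
    and dw: "\<And>\<tau>. \<tau> \<in> {a..b} \<Longrightarrow> (w has_real_derivative w1 \<tau>) (at \<tau>)"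
    and dw1: "\<And>\<tau>. \<tau> \<in> {a..b} \<Longrightarrow> (w1 has_real_derivative w2 \<tau>) (at \<tau>)"
    and cw2: "continuous_on {a..b} w2" and cg: "continuous_on {a..b} g"
    and gb: "\<And>\<tau>. \<tau> \<in> {a..b} \<Longrightarrow> \<bar>g \<tau>\<bar> \<le> c"
    and Gd: "\<And>\<tau>. \<tau> \<in> {a..b} \<Longrightarrow> G \<tau> = w2 \<tau> - g \<tau> * w1 \<tau> + c^2 * w \<tau> + \<beta> * g \<tau> * w \<tau> / \<tau>"
    and M: "integral {a..b} (\<lambda>\<tau>. max (g \<tau>) 0) \<le> M"
  shows "sqrt ((w1 b)^2 + c^2 * (w b)^2) \<le> exp ((1 + 3/(4*c*a)) * M + 9/(16*c*a))
           * (sqrt ((w1 a)^2 + c^2 * (w a)^2) + integral {a..b} (\<lambda>\<tau>. \<bar>G \<tau>\<bar>))"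
proof -
  have cw: "continuous_on {a..b} w"
    by (rule DERIV_continuous_on[of _ _ w1]) (use dw has_field_derivative_at_within in blast)
  have cw1: "continuous_on {a..b} w1"
    by (rule DERIV_continuous_on[of _ _ w2]) (use dw1 has_field_derivative_at_within in blast)
  have cG0: "continuous_on {a..b} (\<lambda>\<tau>. w2 \<tau> - g \<tau> * w1 \<tau> + c^2 * w \<tau> + \<beta> * g \<tau> * w \<tau> / \<tau>)"
    using a0 by (intro continuous_intros cw cw1 cw2 cg) auto
  have cG: "continuous_on {a..b} (\<lambda>\<tau>. \<bar>G \<tau>\<bar>)"
    by (rule continuous_on_rabs, rule continuous_on_cong[THEN iffD1, OF refl _ cG0]) (use Gd in auto)
  define gp where "gp = (\<lambda>\<tau>. max (g \<tau>) 0)"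
  have cgp: "continuous_on {a..b} gp" unfolding gp_def by (intro continuous_intros cg)
  define K1 where "K1 = 1 + 3/(4*c*a)"
  have K1pos: "K1 > 0"
  proof -
    have "3 / (4*c*a) > 0" using a0 c0 by simp
    then show ?thesis unfolding K1_def by linarith
  qed
  define A where "A = (\<lambda>\<tau>. K1 * integral {a..\<tau>} gp + 9/(16*c) * (1/a - 1/\<tau>))"
  define Ap where "Ap = (\<lambda>\<tau>::real. K1 * gp \<tau> + 9/(16*c*\<tau>^2))"
  define E where "E = (\<lambda>\<tau>. (w1 \<tau>)^2 + c^2 * (w \<tau>)^2)"
  define IG where "IG = (\<lambda>\<tau>. integral {a..\<tau>} (\<lambda>\<tau>. \<bar>G \<tau>\<bar>))"
  have dA: "(A has_real_derivative Ap x) (at x within {a..b})" if x: "x \<in> {a..b}" for x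
  proof -
    have x0: "x \<noteq> 0" using x a0 by auto
    have h1: "((\<lambda>\<tau>. integral {a..\<tau>} gp) has_real_derivative gp x) (at x within {a..b})"
      by (rule integral_has_real_derivative[OF cgp x])
    have h2: "((\<lambda>\<tau>. 9/(16*c) * (1/a - 1/\<tau>)) has_real_derivative 9/(16*c*x^2)) (at x within {a..b})"
      using x0 c0 by (auto intro!: derivative_eq_intros simp: field_simps power2_eq_square)
    show ?thesis unfolding A_def Ap_def using DERIV_add[OF DERIV_cmult[OF h1, of K1] h2] by simp
  qed
  have dE: "(E has_real_derivative (2 * w1 x * w2 x + c^2 * (2 * w x * w1 x))) (at x within {a..b})"
    if x: "x \<in> {a..b}" for x
  proof -
    have "(E has_real_derivative (2 * w1 x * w2 x + c^2 * (2 * w x * w1 x))) (at x)"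
      unfolding E_def using dw[OF x] dw1[OF x]
      by (auto intro!: derivative_eq_intros)
    then show ?thesis by (rule has_field_derivative_at_within)
  qed
  have dIG: "(IG has_real_derivative \<bar>G x\<bar>) (at x within {a..b})" if x: "x \<in> {a..b}" for x
    unfolding IG_def by (rule integral_has_real_derivative[OF cG x])
  have A_a: "A a = 0" unfolding A_def by simp
  have A_nonneg: "A x \<ge> 0" if x: "x \<in> {a..b}" for x
  proof -
    have "integral {a..x} gp \<ge> 0"
      using x by (intro integral_nonneg integrable_continuous_real continuous_on_subset[OF cgp]) (auto simp: gp_def)
    moreover have "1/a - 1/x \<ge> 0" using x a0 by (auto simp: field_simps)
    ultimately show ?thesis unfolding A_def using K1pos c0 by auto
  qed
  have A_b: "A b \<le> K1 * M + 9/(16*c*a)"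
  proof -
    have "K1 * integral {a..b} gp \<le> K1 * M" using M K1pos unfolding gp_def by simp
    moreover have "9/(16*c) * (1/a - 1/b) \<le> 9/(16*c) * (1/a)"
      using ab a0 c0 by (intro mult_left_mono) auto
    ultimately show ?thesis unfolding A_def by simp
  qed
  have main: "sqrt (E b) \<le> exp (A b) * (sqrt (E a) + IG b) + exp (A b) * sqrt \<epsilon>" if eps: "\<epsilon> > 0" for \<epsilon>
  proof -
    define u where "u = (\<lambda>\<tau>. sqrt (E \<tau> + \<epsilon>))"
    have Epos: "E x + \<epsilon> > 0" for x using eps unfolding E_def by (simp add: add_nonneg_pos)
    have upos: "u x > 0" for x unfolding u_def using Epos by simp
    define Ep where "Ep = (\<lambda>x. 2 * w1 x * w2 x + c^2 * (2 * w x * w1 x))"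
    have du: "(u has_real_derivative (inverse (u x) / 2 * Ep x)) (at x within {a..b})" if x: "x \<in> {a..b}" for x
    proof -
      have "((\<lambda>\<tau>. E \<tau> + \<epsilon>) has_real_derivative Ep x) (at x within {a..b})"
        using dE[OF x] unfolding Ep_def by (auto intro!: derivative_eq_intros)
      from DERIV_chain2[OF DERIV_real_sqrt[OF Epos[of x]] this]
      show ?thesis unfolding u_def by simp
    qed
    define F where "F = (\<lambda>\<tau>. exp (- A \<tau>) * u \<tau> - IG \<tau>)"
    define Fp where "Fp = (\<lambda>x. exp (- A x) * (inverse (u x) / 2 * Ep x) + (- Ap x * exp (- A x)) * u x - \<bar>G x\<bar>)"
    have dF: "(F has_real_derivative Fp x) (at x within {a..b})" if x: "x \<in> {a..b}" for x
    proof -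
      have e1: "((\<lambda>\<tau>. exp (- A \<tau>)) has_real_derivative (exp (- A x) * (- Ap x))) (at x within {a..b})"
        using dA[OF x] by (auto intro!: derivative_eq_intros)
      show ?thesis unfolding F_def Fp_def
        using DERIV_diff[OF DERIV_mult[OF e1 du[OF x]] dIG[OF x]] by (simp add: algebra_simps)
    qed
    have Fp_nonpos: "Fp x \<le> 0" if x: "x \<in> {a..b}" for x
    proof -
      have x0: "x > 0" "a \<le> x" using x a0 by auto
      have ode: "w2 x + c^2 * w x = G x + g x * w1 x - \<beta> * g x * w x / x" using Gd[OF x] by simp
      have Epeq: "Ep x = 2 * g x * ((w1 x)^2 - \<beta> * w x * w1 x / x) + 2 * w1 x * G x"
        unfolding Ep_def
      proof -
        have "2 * w1 x * w2 x + c\<^sup>2 * (2 * w x * w1 x) = 2 * w1 x * (w2 x + c^2 * w x)" by (simp add: algebra_simps)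
        also have "\<dots> = 2 * w1 x * (G x + g x * w1 x - \<beta> * g x * w x / x)" using ode by simp
        also have "\<dots> = 2 * g x * ((w1 x)^2 - \<beta> * w x * w1 x / x) + 2 * w1 x * G x"
          by (simp add: algebra_simps power2_eq_square)
        finally show "2 * w1 x * w2 x + c\<^sup>2 * (2 * w x * w1 x) = 2 * g x * ((w1 x)^2 - \<beta> * w x * w1 x / x) + 2 * w1 x * G x" .
      qed
      have k: "2 * g x * ((w1 x)^2 - \<beta> * w x * w1 x / x) \<le> 2 * Ap x * E x"
        using key_ineq[OF c0 a0 x0(2) bt gb[OF x], of "w1 x" "w x"]
        unfolding Ap_def K1_def gp_def E_def by simp
      have Apnn: "Ap x \<ge> 0" unfolding Ap_def gp_def using K1pos c0 x0 by simp
      have "E x \<le> (u x)^2" unfolding u_def using Epos[of x] eps by simp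
      then have k2: "2 * Ap x * E x \<le> 2 * Ap x * (u x)^2" using Apnn by (intro mult_left_mono) auto
      have w1u: "\<bar>w1 x\<bar> \<le> u x"
      proof -
        have "(w1 x)^2 \<le> E x + \<epsilon>" unfolding E_def using eps c0 by simp
        then show ?thesis unfolding u_def by (simp add: real_le_rsqrt)
      qed
      have k3: "2 * w1 x * G x \<le> 2 * u x * \<bar>G x\<bar>"
      proof -
        have "w1 x * G x \<le> \<bar>w1 x\<bar> * \<bar>G x\<bar>" by (metis abs_ge_self abs_mult)
        also have "\<dots> \<le> u x * \<bar>G x\<bar>" using w1u by (intro mult_right_mono) auto
        finally show ?thesis by simp
      qed
      have "Ep x \<le> 2 * Ap x * (u x)^2 + 2 * u x * \<bar>G x\<bar>" using Epeq k k2 k3 by simp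
      then have Q: "inverse (u x) / 2 * Ep x - Ap x * u x \<le> \<bar>G x\<bar>"
        using upos[of x] by (simp add: field_simps power2_eq_square)
      have ex1: "exp (- A x) \<le> 1" using A_nonneg[OF x] by simp
      have "Fp x = exp (- A x) * (inverse (u x) / 2 * Ep x - Ap x * u x) - \<bar>G x\<bar>"
        unfolding Fp_def by (simp add: algebra_simps)
      also have "\<dots> \<le> 0"
      proof (cases "inverse (u x) / 2 * Ep x - Ap x * u x \<ge> 0")
        case True
        then have "exp (- A x) * (inverse (u x) / 2 * Ep x - Ap x * u x) \<le> 1 * (inverse (u x) / 2 * Ep x - Ap x * u x)"
          using ex1 by (intro mult_right_mono) auto
        then show ?thesis using Q by simp
      next
        case False
        then have "exp (- A x) * (inverse (u x) / 2 * Ep x - Ap x * u x) \<le> 0"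
          by (intro mult_nonneg_nonpos) auto
        then show ?thesis by simp
      qed
      finally show ?thesis .
    qed
    have Fdec: "F b \<le> F a"
    proof (rule DERIV_nonpos_imp_decreasing_open[OF ab])
      fix x assume x: "a < x" "x < b"
      then have "x \<in> interior {a..b}" by simp
      then have "at x within {a..b} = at x" by (rule at_within_interior)
      then show "\<exists>y. (F has_real_derivative y) (at x) \<and> y \<le> 0"
        using dF[of x] Fp_nonpos[of x] x by (metis atLeastAtMost_iff less_imp_le)
    next
      show "continuous_on {a..b} F" by (rule DERIV_continuous_on[OF dF])
    qed
    have "F a = u a" unfolding F_def IG_def A_a by simp
    then have "exp (- A b) * u b \<le> u a + IG b" using Fdec unfolding F_def by simp
    then have "u b \<le> exp (A b) * (u a + IG b)"
      by (simp add: exp_minus field_simps)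
    moreover have "sqrt (E b) \<le> u b" unfolding u_def using eps by simp
    moreover have "u a \<le> sqrt (E a) + sqrt \<epsilon>"
    proof -
      have "E a \<ge> 0" unfolding E_def by simp
      then show ?thesis unfolding u_def using sqrt_add_le_add_sqrt[of "E a" \<epsilon>] eps by simp
    qed
    ultimately show ?thesis
      by (smt (verit, best) exp_gt_zero mult_left_mono distrib_left)
  qed
  have "sqrt (E b) \<le> exp (A b) * (sqrt (E a) + IG b)"
    by (rule le_eps_lemma[of "exp (A b)"]) (use main in auto)
  also have "\<dots> \<le> exp (K1 * M + 9/(16*c*a)) * (sqrt (E a) + IG b)"
  proof (rule mult_right_mono)
    show "exp (A b) \<le> exp (K1 * M + 9 / (16 * c * a))" using A_b by simp
    have "IG b \<ge> 0" unfolding IG_def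
      using ab by (intro integral_nonneg integrable_continuous_real cG) auto
    then show "0 \<le> sqrt (E a) + IG b" unfolding E_def by simp
  qed
  finally show ?thesis unfolding E_def K1_def IG_def .
qed

lemma C2_facts:
  assumes "C2_on U v"
  shows "open U" "\<And>y. y \<in> U \<Longrightarrow> v differentiable (at y)"
    "\<And>y e. y \<in> U \<Longrightarrow> pd v e differentiable (at y)"
    "\<And>e. continuous_on U (pd v e)" "continuous_on U v"
    "\<And>e e'. continuous_on U (pd (pd v e) e')"
proof -
  show o: "open U" using assms by (simp add: C2_on_def)
  show "\<And>y. y \<in> U \<Longrightarrow> v differentiable (at y)"
    using assms o by (auto simp: C2_on_def differentiable_on_eq_differentiable_at)
  show "\<And>y e. y \<in> U \<Longrightarrow> pd v e differentiable (at y)"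
    using assms o by (auto simp: C2_on_def differentiable_on_eq_differentiable_at)
  show "\<And>e. continuous_on U (pd v e)"
    using assms by (auto simp: C2_on_def intro: differentiable_imp_continuous_on)
  show "continuous_on U v"
    using assms by (auto simp: C2_on_def intro: differentiable_imp_continuous_on)
  show "\<And>e e'. continuous_on U (pd (pd v e) e')"
    using assms by (auto simp: C2_on_def)
qed

lemma pd_zero_fun: "pd (\<lambda>_. 0) d q = 0"
  by (simp add: pd_def)

lemma near_cone_pd_zero:
  assumes C2: "C2_on U v" and KU: "Kreg s0 s1 \<subseteq> U" and dl: "\<delta> > 0"
    and vz: "\<forall>p\<in>Kreg s0 s1. rco p > tco p - 1 - \<delta> \<longrightarrow> v p = 0"
    and q1: "s0^2 \<le> (fst q)^2 - (norm (snd q))^2" and q2: "(fst q)^2 - (norm (snd q))^2 < s1^2"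
    and q3: "norm (snd q) < fst q - 1" and q4: "norm (snd q) > fst q - 1 - \<delta>/2"
  shows "v q = 0" "pd v d q = 0"
proof -
  have qK: "q \<in> Kreg s0 s1" using q1 q2 q3 by (cases q) (auto simp: Kreg_def)
  then show "v q = 0" using vz q4 dl by (auto simp: rco_def tco_def)
  define Onb where "Onb = {q::pt. s0^2 < (fst q)^2 - (norm (snd q))^2} \<inter> {q. (fst q)^2 - (norm (snd q))^2 < s1^2}
     \<inter> {q. norm (snd q) < fst q - 1} \<inter> {q. fst q - 1 - \<delta> < norm (snd q)}"
  have oO: "open Onb" unfolding Onb_def
    by (intro open_Int open_Collect_less continuous_intros)
  have OK: "Onb \<subseteq> Kreg s0 s1" unfolding Onb_def Kreg_def by auto
  have vO: "v y = 0" if "y \<in> Onb" for y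
    using vz OK that unfolding Onb_def by (auto simp: rco_def tco_def)
  have pdO: "pd v d y = 0" if y: "y \<in> Onb" for y
  proof -
    have "pd v d y = pd (\<lambda>_. 0) d y" by (rule pd_local[OF oO y]) (use vO in auto)
    then show ?thesis by (simp add: pd_zero_fun)
  qed
  define t where "t = fst q"
  define r where "r = norm (snd q)"
  have t1: "t > 1" using q3 unfolding t_def by (smt (verit) norm_ge_zero)
  define \<eta> where "\<eta> = min (\<delta>/2) (min 1 ((s1^2 - (t^2 - r^2)) / (2*t+1)))"
  have \<eta>pos: "\<eta> > 0" unfolding \<eta>_def using dl q2 t1 t_def r_def by auto
  have path: "q + y *\<^sub>R et \<in> Onb" if y: "0 < y" "y < \<eta>" for y
  proof -
    have fs: "fst (q + y *\<^sub>R et) = t + y" "snd (q + y *\<^sub>R et) = snd q" by (simp_all add: et_def t_def)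
    have y1: "y < 1" "y < \<delta>/2" "y < (s1^2 - (t^2 - r^2)) / (2*t+1)" using y unfolding \<eta>_def by auto
    have "y * (2*t+1) < s1^2 - (t^2 - r^2)" using y1(3) t1 by (simp add: field_simps)
    moreover have "y * (2*t + y) \<le> y * (2*t+1)" using y y1 by (intro mult_left_mono) auto
    ultimately have A: "(t+y)^2 - r^2 < s1^2" by (simp add: power2_eq_square algebra_simps)
    have B: "s0^2 < (t+y)^2 - r^2"
    proof -
      have "s0^2 \<le> t^2 - r^2" using q1 unfolding t_def r_def .
      moreover have "0 < y * (2*t + y)" using y t1 by simp
      ultimately show ?thesis by (simp add: power2_eq_square algebra_simps)
    qed
    show ?thesis unfolding Onb_def using A B q3 q4 y1 y unfolding fs by (auto simp: t_def r_def et_def)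
  qed
  have cont: "isCont (pd v d) q"
    using C2_facts(4)[OF C2, of d] C2_facts(1)[OF C2] KU qK continuous_on_eq_continuous_at by blast
  have lim: "((\<lambda>y. pd v d (q + y *\<^sub>R et)) \<longlongrightarrow> pd v d q) (at_right 0)"
  proof -
    have "((\<lambda>y::real. q + y *\<^sub>R et) \<longlongrightarrow> q) (at_right 0)"
      by (auto intro!: tendsto_eq_intros)
    then show ?thesis using isCont_tendsto_compose[OF cont] by blast
  qed
  moreover have "((\<lambda>y. pd v d (q + y *\<^sub>R et)) \<longlongrightarrow> 0) (at_right 0)"
  proof (rule tendsto_eventually)
    show "\<forall>\<^sub>F y in at_right 0. pd v d (q + y *\<^sub>R et) = 0"
      unfolding eventually_at_right[OF \<eta>pos] using path pdO \<eta>pos by blast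
  qed
  ultimately show "pd v d q = 0" using tendsto_unique[OF trivial_limit_at_right_real] by blast
qed

lemma absD_ge: "\<bar>dt w q\<bar> \<le> absD w q" "\<bar>dx a w q\<bar> \<le> absD w q"
  unfolding absD_def by (rule Max_ge; auto)+

lemma absD_cases: "absD w q = \<bar>dt w q\<bar> \<or> (\<exists>a. absD w q = \<bar>dx a w q\<bar>)"
proof -
  have "absD w q \<in> ({\<bar>dt w q\<bar>} \<union> (\<lambda>a. \<bar>dx a w q\<bar>) ` UNIV)"
    unfolding absD_def by (rule Max_in) auto
  then show ?thesis by auto
qed

lemma absD_le_sum: "absD w q \<le> \<bar>dt w q\<bar> + (\<Sum>a\<in>UNIV. \<bar>dx a w q\<bar>)"
proof -
  have s: "\<bar>dx a w q\<bar> \<le> (\<Sum>a\<in>UNIV. \<bar>dx a w q\<bar>)" for a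
    by (rule member_le_sum) auto
  have "(\<Sum>a\<in>UNIV. \<bar>dx a w q\<bar>) \<ge> 0" by (rule sum_nonneg) auto
  then show ?thesis using absD_cases[of w q] s by (smt (verit))
qed

lemma abs1_ge: "\<bar>w q\<bar> \<le> abs1 w q" "\<bar>dt w q\<bar> \<le> abs1 w q" "\<bar>dx a w q\<bar> \<le> abs1 w q" "\<bar>Lb a w q\<bar> \<le> abs1 w q"
  unfolding abs1_def by (rule Max_ge; auto)+

lemma HypK_sub: 
  assumes "0 \<le> s0" "s0 < s1"
  shows "HypK s0 \<subseteq> Kreg s0 s1"
proof
  fix q assume q: "q \<in> HypK s0"
  obtain t x where qq: "q = (t, x)" by (cases q)
  have t: "t = sqrt (s0^2 + (norm x)^2)" "norm x < t - 1" using q qq by (auto simp: HypK_def)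
  have "t^2 = s0^2 + (norm x)^2" using t(1) by simp
  moreover have "s0^2 \<le> s1^2" using assms by (simp add: power_mono)
  ultimately show "q \<in> Kreg s0 s1" using t qq by (auto simp: Kreg_def)
qed

lemma hyp_bdd:
  assumes C2: "C2_on U v" and KU: "Kreg s0 s1 \<subseteq> U" and s0: "1 < s0" "s0 < s1" and dl: "\<delta> > 0"
    and vz: "\<forall>p\<in>Kreg s0 s1. rco p > tco p - 1 - \<delta> \<longrightarrow> v p = 0"
  shows "bdd_above ((\<lambda>q. \<bar>v q\<bar> + absD v q) ` HypK s0)"
proof -
  define Kc where "Kc = {q::pt. fst q = sqrt (s0^2 + (norm (snd q))^2)} \<inter> {q. 1 + \<delta>/2 \<le> fst q - norm (snd q)}"
  have cl: "closed Kc" unfolding Kc_def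
    by (intro closed_Int closed_Collect_eq closed_Collect_le continuous_intros)
  have Kc_props: "fst q^2 - (norm (snd q))^2 = s0^2" "norm (snd q) < fst q - 1" "fst q > 0" if "q \<in> Kc" for q
  proof -
    have a: "fst q = sqrt (s0^2 + (norm (snd q))^2)" "1 + \<delta>/2 \<le> fst q - norm (snd q)" using that by (auto simp: Kc_def)
    have "fst q^2 = s0^2 + (norm (snd q))^2" using a(1) by simp
    then show "fst q^2 - (norm (snd q))^2 = s0^2" by simp
    show "norm (snd q) < fst q - 1" using a(2) dl by simp
    then show "fst q > 0" by (smt (verit) norm_ge_zero)
  qed
  have bd: "bounded Kc"
    unfolding bounded_iff
  proof (intro exI ballI)
    fix q assume q: "q \<in> Kc"
    define t where "t = fst q"
    define r where "r = norm (snd q)"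
    have h: "t^2 - r^2 = s0^2" "r < t - 1" "t > 0" using Kc_props[OF q] by (auto simp: t_def r_def)
    have r0: "r \<ge> 0" by (simp add: r_def)
    have "(t - r) * (t + r) = s0^2" using h(1) by (simp add: power2_eq_square algebra_simps)
    moreover have "t - r \<ge> 1" using h by simp
    moreover have "1 * (t + r) \<le> (t - r) * (t + r)"
      using \<open>t - r \<ge> 1\<close> r0 h(3) by (intro mult_right_mono) auto
    ultimately have tr: "t + r \<le> s0^2" by simp
    have qeq: "q = (t, snd q)" by (simp add: t_def)
    have "norm q \<le> norm t + norm (snd q)" by (subst qeq, rule norm_Pair_le)
    also have "\<dots> = t + r" using h(3) by (simp add: r_def)
    finally show "norm q \<le> s0^2" using tr by simp
  qed
  have cpt: "compact Kc" using cl bd by (simp add: compact_eq_bounded_closed)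
  have KcK: "Kc \<subseteq> Kreg s0 s1"
  proof
    fix q assume q: "q \<in> Kc"
    have "s0^2 \<le> s1^2" using s0 by (simp add: power_mono)
    then show "q \<in> Kreg s0 s1" using Kc_props[OF q] by (cases q) (auto simp: Kreg_def)
  qed
  define \<psi> where "\<psi> = (\<lambda>q. \<bar>v q\<bar> + \<bar>dt v q\<bar> + (\<Sum>a\<in>UNIV. \<bar>dx a v q\<bar>))"
  have c\<psi>: "continuous_on U \<psi>" unfolding \<psi>_def dt_def dx_def
    by (intro continuous_intros C2_facts[OF C2])
  have "compact (\<psi> ` Kc)"
    by (rule compact_continuous_image[OF continuous_on_subset[OF c\<psi>] cpt]) (use KcK KU in auto)
  then obtain B where B: "\<And>q. q \<in> Kc \<Longrightarrow> norm (\<psi> q) \<le> B"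
    using compact_imp_bounded[of "\<psi> ` Kc"] unfolding bounded_iff by auto
  show ?thesis
  proof (rule bdd_aboveI[of _ "max B 0"])
    fix y assume "y \<in> (\<lambda>q. \<bar>v q\<bar> + absD v q) ` HypK s0"
    then obtain q where q: "q \<in> HypK s0" and y: "y = \<bar>v q\<bar> + absD v q" by auto
    obtain t x where qq: "q = (t, x)" by (cases q)
    have tq: "t = sqrt (s0^2 + (norm x)^2)" "norm x < t - 1" using q qq by (auto simp: HypK_def)
    show "y \<le> max B 0"
    proof (cases "1 + \<delta>/2 \<le> t - norm x")
      case True
      then have "q \<in> Kc" using tq qq by (simp add: Kc_def)
      then have "norm (\<psi> q) \<le> B" using B by blast
      then have "\<psi> q \<le> B" by simp
      moreover have "y \<le> \<psi> q" unfolding y \<psi>_def using absD_le_sum[of v q] by simp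
      ultimately show ?thesis by simp
    next
      case False
      have t2: "t^2 - (norm x)^2 = s0^2" using tq(1) by simp
      have s01: "s0^2 < s1^2" using s0 by (simp add: power_strict_mono)
      have z: "v q = 0" "\<And>d. pd v d q = 0"
        using near_cone_pd_zero[OF C2 KU dl vz, of q] t2 s01 tq(2) False qq by auto
      have "absD v q = 0"
        using absD_cases[of v q] z(2) by (auto simp: dt_def dx_def)
      then show ?thesis using y z(1) by simp
    qed
  qed
qed

lemma I2_point:
  assumes "v differentiable (at p)" "tco p > 0" "sco p > 0"
  shows "dt v p = (tco p / sco p) * pd v ((1 / sco p) *\<^sub>R p) p - (\<Sum>a\<in>UNIV. xco p$a * Lb a v p) / (sco p)^2"
proof -
  define t where "t = tco p"
  define s where "s = sco p"
  have tpos: "t > 0" "s > 0" using assms t_def s_def by auto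
  have fq: "fst p = t" "snd p = xco p" by (simp_all add: t_def tco_def xco_def)
  have phi1: "pd v ((1 / sco p) *\<^sub>R p) p = (t * dt v p + (xco p$1 * dx 1 v p + xco p$2 * dx 2 v p + xco p$3 * dx 3 v p)) / s"
    using pd_lin[OF assms(1)] by (simp add: sum_3 fq flip: s_def) (simp add: add_divide_distrib)
  have tau2: "s^2 = t^2 - ((xco p$1)^2 + (xco p$2)^2 + (xco p$3)^2)"
    using tau2_lemma[OF assms(3)] t_def s_def by simp
  have "(\<Sum>a\<in>UNIV. xco p$a * Lb a v p) = xco p$1 * (xco p$1 * dt v p + t * dx 1 v p) + xco p$2 * (xco p$2 * dt v p + t * dx 2 v p)
         + xco p$3 * (xco p$3 * dt v p + t * dx 3 v p)"
    by (simp add: sum_3 Lb_def t_def)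
  then show ?thesis unfolding phi1 using tpos tau2
    apply (simp add: field_simps power2_eq_square flip: t_def s_def)
    by algebra
qed

lemma lhs_bound:
  assumes "v differentiable (at p)" "tco p > 0" "sco p > 0" "sco p \<le> tco p" "rco p \<le> tco p"
  shows "sco p powr (3/2) * (\<bar>v p\<bar> + (sco p / tco p) * absD v p) \<le>
     \<bar>sco p powr (3/2) * v p\<bar> + \<bar>3/2 * sco p powr (1/2) * v p + sco p powr (3/2) * pd v ((1/sco p) *\<^sub>R p) p\<bar>
     + 6 * sco p powr (1/2) * abs1 v p"
proof -
  define t where "t = tco p"
  define s where "s = sco p"
  define \<sigma> where "\<sigma> = sqrt s"
  define \<phi>1 where "\<phi>1 = pd v ((1/sco p) *\<^sub>R p) p"
  define A1 where "A1 = abs1 v p"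
  define SL where "SL = (\<Sum>a\<in>UNIV. xco p$a * Lb a v p)"
  have tpos: "t > 0" "s > 0" "s \<le> t" using assms t_def s_def by auto
  have sig: "\<sigma> > 0" "\<sigma> * \<sigma> = s" using tpos by (auto simp: \<sigma>_def)
  have pw: "s powr (3/2) = s * \<sigma>" "s powr (1/2) = \<sigma>" using powr_facts[OF tpos(2)] by (auto simp: \<sigma>_def)
  define W1 where "W1 = \<bar>3/2 * \<sigma> * v p + s * \<sigma> * \<phi>1\<bar>"
  have A1nn: "A1 \<ge> 0" using abs1_ge(1)[of v p] A1_def by simp
  have vA: "\<bar>v p\<bar> \<le> A1" using abs1_ge(1) A1_def by simp
  have SLb: "\<bar>SL\<bar> \<le> 3 * t * A1"
  proof -
    have each: "\<bar>xco p$a * Lb a v p\<bar> \<le> t * A1" for a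
    proof -
      have "\<bar>xco p$a\<bar> \<le> t" using component_le_norm_cart[of "xco p" a] assms(5)
        by (simp add: rco_def xco_def t_def)
      moreover have "\<bar>Lb a v p\<bar> \<le> A1" using abs1_ge(4) A1_def by simp
      ultimately show ?thesis by (simp add: abs_mult mult_mono)
    qed
    have "\<bar>SL\<bar> \<le> (\<Sum>a\<in>UNIV. \<bar>xco p$a * Lb a v p\<bar>)" unfolding SL_def by (rule sum_abs)
    also have "\<dots> \<le> (\<Sum>a\<in>(UNIV::3 set). t * A1)" by (rule sum_mono) (rule each)
    also have "\<dots> = 3 * t * A1" by simp
    finally show ?thesis .
  qed
  have I2: "dt v p = (t / s) * \<phi>1 - SL / s^2"
    using I2_point[OF assms(1-3)] unfolding t_def s_def \<phi>1_def SL_def .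
  have a: "(s/t) * (s * \<sigma>) * \<bar>dt v p\<bar> \<le> W1 + 9/2 * \<sigma> * A1"
  proof -
    have e: "(s/t) * (s * \<sigma>) * dt v p = s * \<sigma> * \<phi>1 - \<sigma> * SL / t"
      unfolding I2 using tpos sig by (simp add: field_simps power2_eq_square)
    have "(s/t) * (s * \<sigma>) * \<bar>dt v p\<bar> = \<bar>(s/t) * (s * \<sigma>) * dt v p\<bar>"
      using tpos sig by (simp add: abs_mult)
    also have "\<dots> = \<bar>s * \<sigma> * \<phi>1 - \<sigma> * SL / t\<bar>" using e by simp
    also have "\<dots> \<le> \<bar>s * \<sigma> * \<phi>1\<bar> + \<sigma> * \<bar>SL\<bar> / t"
    proof -
      have "\<bar>\<sigma> * SL / t\<bar> = \<sigma> * \<bar>SL\<bar> / t" using tpos sig by (simp add: abs_mult)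
      then show ?thesis using abs_triangle_ineq4[of "s * \<sigma> * \<phi>1" "\<sigma> * SL / t"] by simp
    qed
    also have "\<dots> \<le> (W1 + 3/2 * \<sigma> * A1) + 3 * \<sigma> * A1"
    proof (rule add_mono)
      have "\<bar>s * \<sigma> * \<phi>1\<bar> \<le> W1 + \<bar>3/2 * \<sigma> * v p\<bar>" unfolding W1_def by linarith
      also have "\<bar>3/2 * \<sigma> * v p\<bar> = 3/2 * \<sigma> * \<bar>v p\<bar>" using sig by (simp add: abs_mult)
      also have "3/2 * \<sigma> * \<bar>v p\<bar> \<le> 3/2 * \<sigma> * A1" using sig vA by simp
      finally show "\<bar>s * \<sigma> * \<phi>1\<bar> \<le> W1 + 3/2 * \<sigma> * A1" by simp
      have "\<sigma> * \<bar>SL\<bar> \<le> \<sigma> * (3 * t * A1)" using SLb sig by (simp)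
      then show "\<sigma> * \<bar>SL\<bar> / t \<le> 3 * \<sigma> * A1" using tpos by (simp add: field_simps)
    qed
    finally show ?thesis by linarith
  qed
  have b: "(s/t) * (s * \<sigma>) * \<bar>dx i v p\<bar> \<le> W1 + 11/2 * \<sigma> * A1" for i
  proof -
    have Pa: "dx i v p = (Lb i v p - xco p$i * dt v p) / t" using tpos by (simp add: Lb_def t_def field_simps)
    have xi: "\<bar>xco p$i\<bar> \<le> t" using component_le_norm_cart[of "xco p" i] assms(5)
        by (simp add: rco_def xco_def t_def)
    have "\<bar>dx i v p\<bar> = \<bar>Lb i v p / t - xco p$i * dt v p / t\<bar>" unfolding Pa by (simp add: diff_divide_distrib)
    also have "\<dots> \<le> \<bar>Lb i v p / t\<bar> + \<bar>xco p$i * dt v p / t\<bar>" by (rule abs_triangle_ineq4)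
    also have "\<dots> = \<bar>Lb i v p\<bar> / t + \<bar>xco p$i\<bar> / t * \<bar>dt v p\<bar>" using tpos by (simp add: abs_mult)
    also have "\<dots> \<le> A1 / t + \<bar>dt v p\<bar>"
    proof (rule add_mono)
      show "\<bar>Lb i v p\<bar> / t \<le> A1 / t" using abs1_ge(4) A1_def tpos by (simp add: divide_right_mono)
      have "\<bar>xco p$i\<bar> / t \<le> 1" using xi tpos by simp
      then show "\<bar>xco p$i\<bar> / t * \<bar>dt v p\<bar> \<le> \<bar>dt v p\<bar>"
        using mult_right_mono[of "\<bar>xco p$i\<bar> / t" 1 "\<bar>dt v p\<bar>"] by simp
    qed
    finally have d1: "\<bar>dx i v p\<bar> \<le> A1 / t + \<bar>dt v p\<bar>" .
    have k: "(s/t) * (s * \<sigma>) \<ge> 0" using tpos sig by simp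
    have "(s/t) * (s * \<sigma>) * \<bar>dx i v p\<bar> \<le> (s/t) * (s * \<sigma>) * (A1 / t) + (s/t) * (s * \<sigma>) * \<bar>dt v p\<bar>"
      using mult_left_mono[OF d1 k] by (simp add: distrib_left)
    also have "(s/t) * (s * \<sigma>) * (A1 / t) \<le> \<sigma> * A1"
    proof -
      have "(s/t) * (s * \<sigma>) * (A1 / t) = (s/t)^2 * (\<sigma> * A1)" by (simp add: power2_eq_square field_simps)
      also have "\<dots> \<le> 1 * (\<sigma> * A1)"
      proof (rule mult_right_mono)
        have "s/t \<le> 1" "0 \<le> s/t" using tpos by auto
        then show "(s/t)^2 \<le> 1" by (simp add: power_le_one)
      qed (use sig A1nn in simp)
      finally show ?thesis by simp
    qed
    finally show ?thesis using a by simp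
  qed
  have c: "(s/t) * (s * \<sigma>) * absD v p \<le> W1 + 11/2 * \<sigma> * A1"
  proof (cases "absD v p = \<bar>dt v p\<bar>")
    case True
    have h0: "0 \<le> \<sigma> * A1" using sig A1nn by simp
    have "9/2 * \<sigma> * A1 \<le> 11/2 * \<sigma> * A1" using mult_right_mono[OF _ h0, of "9/2" "11/2"] by (simp add: mult.assoc)
    then show ?thesis unfolding True using a by linarith
  next
    case False
    then obtain i where "absD v p = \<bar>dx i v p\<bar>" using absD_cases[of v p] by blast
    then show ?thesis using b[of i] by simp
  qed
  have "s powr (3/2) * (\<bar>v p\<bar> + (s / t) * absD v p) = \<bar>s * \<sigma> * v p\<bar> + (s/t) * (s * \<sigma>) * absD v p"
    unfolding pw using sig tpos by (simp add: abs_mult algebra_simps)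
  also have "\<dots> \<le> \<bar>s * \<sigma> * v p\<bar> + W1 + 6 * \<sigma> * A1"
  proof -
    have h0: "0 \<le> \<sigma> * A1" using sig A1nn by simp
    have "11/2 * \<sigma> * A1 \<le> 6 * \<sigma> * A1" using mult_right_mono[OF _ h0, of "11/2" "6"] by (simp add: mult.assoc)
    then show ?thesis using c by linarith
  qed
  finally have fin: "s powr (3/2) * (\<bar>v p\<bar> + (s / t) * absD v p) \<le> \<bar>s * \<sigma> * v p\<bar> + W1 + 6 * \<sigma> * A1" .
  show ?thesis using fin unfolding W1_def A1_def \<phi>1_def by (simp add: pw flip: s_def t_def)
qed

lemma sco_sq:
  assumes "sco p > 0"
  shows "(sco p)^2 = (tco p)^2 - (rco p)^2"
proof -
  have "fst p^2 - (norm (snd p))^2 > 0" using assms by (simp add: sco_def)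
  then show ?thesis by (simp add: sco_def tco_def rco_def)
qed

lemma ray_setup:
  assumes "tco p > 0" "sco p > 0" "\<tau> > 0"
  shows "gam p \<tau> = \<tau> *\<^sub>R ((1/sco p) *\<^sub>R p)" "tco (gam p \<tau>) = \<tau> * tco p / sco p"
    "xco (gam p \<tau>) = (\<tau> / sco p) *\<^sub>R xco p" "rco (gam p \<tau>) = \<tau> * rco p / sco p" "sco (gam p \<tau>) = \<tau>"
proof -
  show "gam p \<tau> = \<tau> *\<^sub>R ((1/sco p) *\<^sub>R p)" by (simp add: gam_def)
  show t: "tco (gam p \<tau>) = \<tau> * tco p / sco p" by (simp add: gam_def tco_def)
  show "xco (gam p \<tau>) = (\<tau> / sco p) *\<^sub>R xco p" by (simp add: gam_def xco_def)
  show r: "rco (gam p \<tau>) = \<tau> * rco p / sco p" using assms by (simp add: gam_def rco_def)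
  have "sco (gam p \<tau>) = sqrt ((tco (gam p \<tau>))^2 - (rco (gam p \<tau>))^2)" by (simp add: sco_def tco_def rco_def)
  also have "\<dots> = sqrt ((\<tau> / sco p)^2 * ((tco p)^2 - (rco p)^2))" unfolding t r using assms(2) by (simp add: field_simps power2_eq_square)
  also have "\<dots> = sqrt ((\<tau> / sco p)^2 * (sco p)^2)" using sco_sq[OF assms(2)] by simp
  also have "\<dots> = \<tau>" using assms by (simp add: real_sqrt_mult)
  finally show "sco (gam p \<tau>) = \<tau>" .
qed

lemma ray_derivs:
  assumes C2: "C2_on U v" and "\<tau> > 0" and "\<tau> *\<^sub>R e \<in> U"
  shows "((\<lambda>\<tau>. \<tau> powr (3/2) * v (\<tau> *\<^sub>R e)) has_real_derivative
            (3/2 * \<tau> powr (1/2) * v (\<tau> *\<^sub>R e) + \<tau> powr (3/2) * pd v e (\<tau> *\<^sub>R e))) (at \<tau>)"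
    "((\<lambda>\<tau>. 3/2 * \<tau> powr (1/2) * v (\<tau> *\<^sub>R e) + \<tau> powr (3/2) * pd v e (\<tau> *\<^sub>R e)) has_real_derivative
       (3/4 * \<tau> powr (-1/2) * v (\<tau> *\<^sub>R e) + 3 * \<tau> powr (1/2) * pd v e (\<tau> *\<^sub>R e)
          + \<tau> powr (3/2) * pd (pd v e) e (\<tau> *\<^sub>R e))) (at \<tau>)"
proof -
  have d0: "((\<lambda>\<tau>. v (\<tau> *\<^sub>R e)) has_real_derivative pd v e (\<tau> *\<^sub>R e)) (at \<tau>)"
    by (rule ray_deriv) (use C2_facts(2)[OF C2] assms in auto)
  have d1: "((\<lambda>\<tau>. pd v e (\<tau> *\<^sub>R e)) has_real_derivative pd (pd v e) e (\<tau> *\<^sub>R e)) (at \<tau>)"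
    by (rule ray_deriv) (use C2_facts(3)[OF C2] assms in auto)
  have p32: "((\<lambda>z. z powr (3/2)) has_real_derivative (3/2) * \<tau> powr (3/2 - 1)) (at \<tau>)"
    using has_real_derivative_powr[OF assms(2)] by blast
  have p12: "((\<lambda>z. z powr (1/2)) has_real_derivative (1/2) * \<tau> powr (1/2 - 1)) (at \<tau>)"
    using has_real_derivative_powr[OF assms(2)] by blast
  have e1: "(3/2 - 1::real) = 1/2" "(1/2 - 1::real) = -1/2" by simp_all
  show "((\<lambda>\<tau>. \<tau> powr (3/2) * v (\<tau> *\<^sub>R e)) has_real_derivative
            (3/2 * \<tau> powr (1/2) * v (\<tau> *\<^sub>R e) + \<tau> powr (3/2) * pd v e (\<tau> *\<^sub>R e))) (at \<tau>)"
    using DERIV_mult[OF p32 d0] unfolding e1 by (simp add: algebra_simps)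
  have A: "((\<lambda>\<tau>. 3/2 * (\<tau> powr (1/2) * v (\<tau> *\<^sub>R e))) has_real_derivative
      3/2 * ((1/2) * \<tau> powr (-1/2) * v (\<tau> *\<^sub>R e) + pd v e (\<tau> *\<^sub>R e) * \<tau> powr (1/2))) (at \<tau>)"
    using DERIV_cmult[OF DERIV_mult[OF p12 d0], of "3/2"] unfolding e1 .
  have B: "((\<lambda>\<tau>. \<tau> powr (3/2) * pd v e (\<tau> *\<^sub>R e)) has_real_derivative
      (3/2 * \<tau> powr (1/2) * pd v e (\<tau> *\<^sub>R e) + pd (pd v e) e (\<tau> *\<^sub>R e) * \<tau> powr (3/2))) (at \<tau>)"
    using DERIV_mult[OF p32 d1] unfolding e1 .
  show "((\<lambda>\<tau>. 3/2 * \<tau> powr (1/2) * v (\<tau> *\<^sub>R e) + \<tau> powr (3/2) * pd v e (\<tau> *\<^sub>R e)) has_real_derivative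
       (3/4 * \<tau> powr (-1/2) * v (\<tau> *\<^sub>R e) + 3 * \<tau> powr (1/2) * pd v e (\<tau> *\<^sub>R e)
          + \<tau> powr (3/2) * pd (pd v e) e (\<tau> *\<^sub>R e))) (at \<tau>)"
    using DERIV_add[OF A B] by (simp add: algebra_simps)
qed

lemma deriv_local_zero:
  assumes "(f has_real_derivative D) (at x)" "a < x" "x < b" "\<And>y. a < y \<Longrightarrow> y < b \<Longrightarrow> f y = 0"
  shows "D = 0"
proof -
  have ev: "eventually (\<lambda>y. f y = (\<lambda>_. 0) y) (nhds x)"
  proof -
    have "eventually (\<lambda>y. y \<in> {a<..<b}) (nhds x)"
      by (rule eventually_nhds_in_open) (use assms in auto)
    then show ?thesis by eventually_elim (use assms(4) in auto)
  qed
  have "((\<lambda>_. 0) has_real_derivative D) (at x)"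
    using assms(1) DERIV_cong_ev[OF refl ev refl] by blast
  moreover have "((\<lambda>_. 0) has_real_derivative 0) (at x)" by simp
  ultimately show ?thesis using DERIV_unique by blast
qed

lemma p_facts:
  assumes "p \<in> Kreg s0 s1" "s0 \<ge> 2" "s1 > s0"
  shows "s0^2 \<le> (tco p)^2 - (rco p)^2" "(tco p)^2 - (rco p)^2 \<le> s1^2" "rco p < tco p - 1"
    "rco p \<ge> 0" "tco p > 1" "sco p > 0" "sco p \<ge> s0" "sco p \<le> s1" "sco p \<le> tco p"
    "(sco p)^2 = (tco p)^2 - (rco p)^2"
proof -
  obtain t x where pp: "p = (t, x)" by (cases p)
  show h1: "s0^2 \<le> (tco p)^2 - (rco p)^2" "(tco p)^2 - (rco p)^2 \<le> s1^2" "rco p < tco p - 1"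
    using assms(1) pp by (auto simp: Kreg_def tco_def rco_def)
  show r0: "rco p \<ge> 0" by (simp add: rco_def)
  show "tco p > 1" using h1(3) r0 by simp
  have sq: "sco p = sqrt ((tco p)^2 - (rco p)^2)" by (simp add: sco_def tco_def rco_def)
  have s0p: "s0 > 0" using assms(2) by simp
  have "sqrt (s0^2) \<le> sqrt ((tco p)^2 - (rco p)^2)" by (rule real_sqrt_le_mono[OF h1(1)])
  then show "sco p \<ge> s0" unfolding sq using s0p by simp
  then show "sco p > 0" using s0p by simp
  have "s1 \<ge> 0" using assms(3) s0p by simp
  moreover have "sqrt ((tco p)^2 - (rco p)^2) \<le> sqrt (s1^2)" by (rule real_sqrt_le_mono[OF h1(2)])
  ultimately show "sco p \<le> s1" unfolding sq by simp
  have "(tco p)^2 - (rco p)^2 \<le> (tco p)^2" using r0 by simp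
  then have "sqrt ((tco p)^2 - (rco p)^2) \<le> sqrt ((tco p)^2)" by (rule real_sqrt_le_mono)
  then show "sco p \<le> tco p" unfolding sq using h1(3) r0 by simp
  have "0 \<le> (tco p)^2 - (rco p)^2" using order_trans[OF zero_le_power2 h1(1)] .
  then show "(sco p)^2 = (tco p)^2 - (rco p)^2" unfolding sq by simp
qed

definition Zc :: "real \<Rightarrow> real \<Rightarrow> real \<Rightarrow> real" where
  "Zc c CS s0 = exp ((1 + 3/(4*c* s0)) * max CS 0 + 9/(16*c* s0))"
definition C0c :: "real \<Rightarrow> real \<Rightarrow> real" where
  "C0c c s0 = s0 * sqrt s0 * (2 + 4* s0 + c)"
definition Cst :: "real \<Rightarrow> real \<Rightarrow> real \<Rightarrow> real" where
  "Cst c CS s0 = (1 + 1/c) * Zc c CS s0 * (C0c c s0 + 1) + 6"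

lemma main_point:
  fixes c C_S s0 s1 eta :: real and h v f S :: "pt \<Rightarrow> real" and U :: "pt set"
  assumes c0: "c > 0" and s02: "s0 \<ge> 2" and s01: "s1 > s0" and KU: "Kreg s0 s1 \<subseteq> U"
    and C2v: "C2_on U v" and C2h: "C2_on U h" and dl: "\<delta> > 0"
    and vz: "\<forall>p\<in>Kreg s0 s1. rco p > tco p - 1 - \<delta> \<longrightarrow> v p = 0"
    and feq: "\<forall>p\<in>Kreg s0 s1. box v p - h p * dt v p + c^2 * v p = f p"
    and hb: "\<forall>p\<in>Kreg s0 s1. \<bar>(tco p / sco p) * h p\<bar> \<le> c"
    and Sh: "\<forall>p\<in>Kreg s0 s1. S p + (tco p / sco p) * h p \<le> 0"
    and Si: "\<forall>p\<in>Kreg s0 s1. (\<lambda>l. \<bar>S (gam p l)\<bar>) integrable_on {lam0 s0 p .. s1}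
            \<and> integral {lam0 s0 p .. s1} (\<lambda>l. \<bar>S (gam p l)\<bar>) \<le> C_S"
    and pK: "p \<in> Kreg s0 s1"
  shows "(sco p / tco p) powr eta * sco p powr (3/2) * (\<bar>v p\<bar> + (sco p / tco p) * absD v p)
            \<le> Cst c C_S s0 * Vbd s0 eta h v f p"
proof -
  note pf = p_facts[OF pK s02 s01]
  define t where "t = tco p"
  define r where "r = rco p"
  define s where "s = sco p"
  have tp: "t > 1" "r \<ge> 0" "r < t - 1" "s > 0" "s \<ge> s0" "s \<le> s1" "s \<le> t" "s^2 = t^2 - r^2"
    using pf by (auto simp: t_def r_def s_def)
  have s0p: "s0 > 0" using s02 by simp
  define lst where "lst = s / (t - r)"
  have tr1: "t - r > 1" using tp by simp
  have lpos: "lst > 0" using tp tr1 by (simp add: lst_def)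
  have llt: "lst < s"
  proof -
    have "s * 1 < s * (t - r)" using tp tr1 by (intro mult_strict_left_mono) auto
    then show ?thesis using tr1 by (simp add: lst_def divide_less_eq)
  qed
  have lsq: "lst^2 = (t + r) / (t - r)"
  proof -
    have "s^2 = (t - r) * (t + r)" using tp by (simp add: power2_eq_square algebra_simps)
    have "lst^2 = s^2 / (t - r)^2" by (simp add: lst_def power_divide)
    also have "\<dots> = ((t - r) * (t + r)) / ((t - r) * (t - r))" using \<open>s^2 = (t - r) * (t + r)\<close> by (simp add: power2_eq_square)
    also have "\<dots> = (t + r) / (t - r)" using tr1 by simp
    finally show ?thesis .
  qed
  define cond where "cond = (rco p / tco p \<le> (s0^2 - 1) / (s0^2 + 1))"
  have cond_iff: "cond \<longleftrightarrow> lst \<le> s0"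
  proof -
    have "cond \<longleftrightarrow> r * (s0^2 + 1) \<le> (s0^2 - 1) * t"
      unfolding cond_def r_def[symmetric] t_def[symmetric] using tp s0p
      by (simp add: divide_le_eq le_divide_eq field_simps add_pos_nonneg)
    also have "\<dots> \<longleftrightarrow> (t + r) \<le> s0^2 * (t - r)" by (simp add: algebra_simps)
    also have "\<dots> \<longleftrightarrow> (t + r) / (t - r) \<le> s0^2" using tr1 by (simp add: divide_le_eq)
    also have "\<dots> \<longleftrightarrow> lst^2 \<le> s0^2" using lsq by simp
    also have "\<dots> \<longleftrightarrow> lst \<le> s0" using lpos s0p by (simp add: power2_le_iff_abs_le)
    finally show ?thesis .
  qed
  define L0 where "L0 = lam0 s0 p"
  have L0_eq: "L0 = (if cond then s0 else lst)"
  proof -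
    have "sqrt ((t + r) / (t - r)) = lst" using lsq lpos by (metis less_eq_real_def real_sqrt_unique)
    then show ?thesis unfolding L0_def lam0_def cond_def using t_def r_def by simp
  qed
  have L0f: "lst \<le> L0" "s0 \<le> L0" "L0 \<le> s"
    using L0_eq cond_iff tp llt by auto
  define e where "e = (1 / s) *\<^sub>R p"
  define k where "k = t / s"
  have kf: "k \<ge> 1" "k > 0" using tp by (auto simp: k_def)
  have gam_e: "gam p \<tau> = \<tau> *\<^sub>R e" for \<tau> by (simp add: gam_def e_def s_def)
  have rs: "tco (\<tau> *\<^sub>R e) = \<tau> * t / s" "rco (\<tau> *\<^sub>R e) = \<tau> * r / s" "sco (\<tau> *\<^sub>R e) = \<tau>"
     "tco (\<tau> *\<^sub>R e) / sco (\<tau> *\<^sub>R e) = k" if "\<tau> > 0" for \<tau>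
  proof -
    note rr = ray_setup[of p \<tau>, folded gam_e s_def t_def r_def]
    show "tco (\<tau> *\<^sub>R e) = \<tau> * t / s" "rco (\<tau> *\<^sub>R e) = \<tau> * r / s" "sco (\<tau> *\<^sub>R e) = \<tau>"
      using rr tp that by (auto simp: gam_e t_def s_def)
    then show "tco (\<tau> *\<^sub>R e) / sco (\<tau> *\<^sub>R e) = k" using that tp by (simp add: k_def)
  qed
  have inK: "\<tau> *\<^sub>R e \<in> Kreg s0 s1" if "s0 \<le> \<tau>" "\<tau> \<le> s" "lst < \<tau>" for \<tau>
  proof -
    have \<tau>0: "\<tau> > 0" using that s0p by simp
    have sq: "(tco (\<tau> *\<^sub>R e))^2 - (rco (\<tau> *\<^sub>R e))^2 = \<tau>^2"
      using sco_sq[of "\<tau> *\<^sub>R e"] rs(3)[OF \<tau>0] \<tau>0 by simp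
    have "s0^2 \<le> \<tau>^2" "\<tau>^2 \<le> s1^2" using that s0p tp by (auto intro!: power_mono)
    moreover have "rco (\<tau> *\<^sub>R e) < tco (\<tau> *\<^sub>R e) - 1"
    proof -
      have "1 < \<tau> * (t - r) / s" using that(3) tr1 tp unfolding lst_def by (simp add: field_simps)
      moreover have "\<tau> * (t - r) / s = \<tau> * t / s - \<tau> * r / s" by (simp add: algebra_simps diff_divide_distrib)
      ultimately show ?thesis unfolding rs(1,2)[OF \<tau>0] by linarith
    qed
    ultimately show ?thesis using sq unfolding Kreg_def by (cases "\<tau> *\<^sub>R e") (auto simp: tco_def rco_def)
  qed
  define \<phi> where "\<phi> = (\<lambda>\<tau>. v (\<tau> *\<^sub>R e))"
  define P1 where "P1 = (\<lambda>\<tau>. pd v e (\<tau> *\<^sub>R e))"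
  define P2 where "P2 = (\<lambda>\<tau>. pd (pd v e) e (\<tau> *\<^sub>R e))"
  define w where "w = (\<lambda>\<tau>. \<tau> powr (3/2) * \<phi> \<tau>)"
  define w1 where "w1 = (\<lambda>\<tau>. 3/2 * \<tau> powr (1/2) * \<phi> \<tau> + \<tau> powr (3/2) * P1 \<tau>)"
  define w2 where "w2 = (\<lambda>\<tau>. 3/4 * \<tau> powr (-1/2) * \<phi> \<tau> + 3 * \<tau> powr (1/2) * P1 \<tau> + \<tau> powr (3/2) * P2 \<tau>)"
  define g where "g = (\<lambda>\<tau>. k * h (\<tau> *\<^sub>R e))"
  define \<beta> where "\<beta> = 3/2 * (1 - 1/k)"
  define G where "G = (\<lambda>\<tau>. w2 \<tau> - g \<tau> * w1 \<tau> + c^2 * w \<tau> + \<beta> * g \<tau> * w \<tau> / \<tau>)"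
  define \<Phi> where "\<Phi> = (\<lambda>\<tau>. \<bar>Rhv h v (gam p \<tau>) + \<tau> powr (3/2) * f (gam p \<tau>)\<bar>)"
  note C2vf = C2_facts[OF C2v]
  have PhiG: "\<Phi> \<tau> = \<bar>G \<tau>\<bar>" if qK: "\<tau> *\<^sub>R e \<in> Kreg s0 s1" and \<tau>0: "\<tau> > 0" for \<tau>
  proof -
    define q where "q = \<tau> *\<^sub>R e"
    have qU: "q \<in> U" using qK KU q_def by auto
    have sq: "sco q = \<tau>" "tco q / sco q = k" "tco q > 0" using rs[OF \<tau>0] \<tau>0 tp by (auto simp: q_def)
    have eq: "(1 / sco q) *\<^sub>R q = e" unfolding sq(1) using \<tau>0 by (simp add: q_def)
    have fq: "f q = box v q - h q * dt v q + c^2 * v q" using feq qK q_def by auto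
    have op: "Rhv h v q + sco q powr (3/2) * f q =
     (3/4 * sco q powr (-1/2) * v q + 3 * sco q powr (1/2) * pd v ((1 / sco q) *\<^sub>R q) q
        + sco q powr (3/2) * pd (pd v ((1 / sco q) *\<^sub>R q)) ((1 / sco q) *\<^sub>R q) q)
     - (tco q / sco q) * h q * (3/2 * sco q powr (1/2) * v q + sco q powr (3/2) * pd v ((1 / sco q) *\<^sub>R q) q)
     + c^2 * (sco q powr (3/2) * v q)
     + 3/2 * (tco q / sco q - 1) * h q * sco q powr (1/2) * v q"
      by (rule ode_point[where U=U and q=q and v=v and f=f and h=h and c=c])
         (use C2vf(1,2) C2vf(3)[OF qU] qU \<tau>0 sq fq in \<open>auto simp: dt_def dx_def\<close>)
    have pw: "\<tau> powr (3/2) / \<tau> = \<tau> powr (1/2)" using powr_facts[OF \<tau>0] \<tau>0 by simp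
    have "\<beta> * g \<tau> * w \<tau> / \<tau> = 3/2 * (k - 1) * h q * \<tau> powr (1/2) * v q"
    proof -
      have "\<beta> * g \<tau> * w \<tau> / \<tau> = 3/2 * (1 - 1/k) * k * h q * v q * (\<tau> powr (3/2) / \<tau>)"
        unfolding \<beta>_def g_def w_def \<phi>_def q_def by simp
      also have "\<dots> = 3/2 * (k - 1) * h q * \<tau> powr (1/2) * v q" unfolding pw using kf by (simp add: field_simps)
      finally show ?thesis .
    qed
    then have "G \<tau> = (3/4 * \<tau> powr (-1/2) * v q + 3 * \<tau> powr (1/2) * pd v e q
        + \<tau> powr (3/2) * pd (pd v e) e q)
     - k * h q * (3/2 * \<tau> powr (1/2) * v q + \<tau> powr (3/2) * pd v e q)
     + c^2 * (\<tau> powr (3/2) * v q)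
     + 3/2 * (k - 1) * h q * \<tau> powr (1/2) * v q"
      unfolding G_def w2_def w1_def w_def \<phi>_def P1_def P2_def g_def q_def by simp
    also have "\<dots> = Rhv h v q + \<tau> powr (3/2) * f q" using op[unfolded eq sq(2), unfolded sq(1)] by simp
    finally have "G \<tau> = Rhv h v q + \<tau> powr (3/2) * f q" .
    then show ?thesis unfolding \<Phi>_def gam_e q_def by simp
  qed
  have Zpos: "Zc c C_S s0 > 0" by (simp add: Zc_def)
  have energy: "sqrt ((w1 s)^2 + c^2 * (w s)^2) \<le> Zc c C_S s0 * (sqrt ((w1 a)^2 + c^2 * (w a)^2) + integral {a..s} (\<lambda>\<tau>. \<bar>G \<tau>\<bar>))
     \<and> continuous_on {a..s} G"
    if a: "L0 \<le> a" "lst < a" "a \<le> s" for a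
  proof -
    have a0: "a > 0" and sa: "s0 \<le> a" using a L0f s0p by auto
    have inKa: "\<tau> *\<^sub>R e \<in> Kreg s0 s1" if "\<tau> \<in> {a..s}" for \<tau> using inK that a sa by auto
    have inUa: "\<tau> *\<^sub>R e \<in> U" if "\<tau> \<in> {a..s}" for \<tau> using inKa that KU by auto
    have pos: "\<tau> > 0" if "\<tau> \<in> {a..s}" for \<tau> using that a0 by auto
    have dw: "(w has_real_derivative w1 \<tau>) (at \<tau>)" if "\<tau> \<in> {a..s}" for \<tau>
      using ray_derivs(1)[OF C2v pos[OF that] inUa[OF that]] unfolding w_def w1_def \<phi>_def P1_def .
    have dw1: "(w1 has_real_derivative w2 \<tau>) (at \<tau>)" if "\<tau> \<in> {a..s}" for \<tau>
      using ray_derivs(2)[OF C2v pos[OF that] inUa[OF that]] unfolding w1_def w2_def \<phi>_def P1_def P2_def .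
    have img: "(\<lambda>\<tau>. \<tau> *\<^sub>R e) ` {a..s} \<subseteq> U" using inUa by auto
    have cr: "continuous_on {a..s} (\<lambda>\<tau>::real. \<tau> *\<^sub>R e)" by (intro continuous_intros)
    have c\<phi>: "continuous_on {a..s} \<phi>" unfolding \<phi>_def by (rule continuous_on_compose2[OF C2vf(5) cr img])
    have cP1: "continuous_on {a..s} P1" unfolding P1_def by (rule continuous_on_compose2[OF C2vf(4) cr img])
    have cP2: "continuous_on {a..s} P2" unfolding P2_def by (rule continuous_on_compose2[OF C2vf(6) cr img])
    have cw2: "continuous_on {a..s} w2" unfolding w2_def using pos a0
      by (intro continuous_intros c\<phi> cP1 cP2) auto
    have cg: "continuous_on {a..s} g" unfolding g_def
      by (intro continuous_intros continuous_on_compose2[OF C2_facts(5)[OF C2h] cr img])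
    have gb: "\<bar>g \<tau>\<bar> \<le> c" if "\<tau> \<in> {a..s}" for \<tau>
      using hb inKa[OF that] rs(4)[OF pos[OF that]] unfolding g_def by auto
    have "1/k \<le> 1" "1/k > 0" using kf by (auto simp: field_simps)
    then have q1: "0 \<le> 1 - 1/k" "1 - 1/k \<le> 1" by linarith+
    have bt1: "0 \<le> \<beta>" unfolding \<beta>_def using q1 by simp
    have bt2: "\<beta> \<le> 3/2" unfolding \<beta>_def using mult_left_mono[OF q1(2), of "3/2"] by simp
    note bt = bt1 bt2
    have M: "integral {a..s} (\<lambda>\<tau>. max (g \<tau>) 0) \<le> max C_S 0"
    proof -
      have SiP: "(\<lambda>l. \<bar>S (gam p l)\<bar>) integrable_on {L0..s1}" "integral {L0..s1} (\<lambda>l. \<bar>S (gam p l)\<bar>) \<le> C_S"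
        using Si pK unfolding L0_def by auto
      have sub: "{a..s} \<subseteq> {L0..s1}" using a tp by auto
      have int1: "(\<lambda>l. \<bar>S (gam p l)\<bar>) integrable_on {a..s}"
        by (rule integrable_subinterval_real[OF SiP(1) sub])
      have le: "max (g \<tau>) 0 \<le> \<bar>S (gam p \<tau>)\<bar>" if "\<tau> \<in> {a..s}" for \<tau>
      proof -
        have "S (\<tau> *\<^sub>R e) + k * h (\<tau> *\<^sub>R e) \<le> 0"
          using Sh inKa[OF that] rs(4)[OF pos[OF that]] by auto
        then show ?thesis unfolding g_def gam_e by auto
      qed
      have "integral {a..s} (\<lambda>\<tau>. max (g \<tau>) 0) \<le> integral {a..s} (\<lambda>l. \<bar>S (gam p l)\<bar>)"
        by (rule integral_le[OF integrable_continuous_real int1 le]) (intro continuous_intros cg)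
      also have "\<dots> \<le> integral {L0..s1} (\<lambda>l. \<bar>S (gam p l)\<bar>)"
        by (rule integral_subset_le[OF sub int1 SiP(1)]) auto
      also have "\<dots> \<le> max C_S 0" using SiP(2) by simp
      finally show ?thesis .
    qed
    have Gd: "G \<tau> = w2 \<tau> - g \<tau> * w1 \<tau> + c^2 * w \<tau> + \<beta> * g \<tau> * w \<tau> / \<tau>" if "\<tau> \<in> {a..s}" for \<tau>
      unfolding G_def by simp
    have est: "sqrt ((w1 s)^2 + c^2 * (w s)^2) \<le> exp ((1 + 3/(4*c*a)) * max C_S 0 + 9/(16*c*a))
           * (sqrt ((w1 a)^2 + c^2 * (w a)^2) + integral {a..s} (\<lambda>\<tau>. \<bar>G \<tau>\<bar>))"
      by (rule energy_est[OF a0 a(3) c0 bt dw dw1 cw2 cg gb Gd M])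
    have ex: "exp ((1 + 3/(4*c*a)) * max C_S 0 + 9/(16*c*a)) \<le> Zc c C_S s0"
    proof -
      have "3/(4*c*a) \<le> 3/(4*c * s0)" using sa s0p c0 by (intro divide_left_mono mult_left_mono) auto
      then have "(1 + 3/(4*c*a)) * max C_S 0 \<le> (1 + 3/(4*c * s0)) * max C_S 0" by (intro mult_right_mono) auto
      moreover have "9/(16*c*a) \<le> 9/(16*c * s0)" using sa s0p c0 by (intro divide_left_mono mult_left_mono) auto
      ultimately show ?thesis unfolding Zc_def by simp
    qed
    have nn: "0 \<le> sqrt ((w1 a)^2 + c^2 * (w a)^2) + integral {a..s} (\<lambda>\<tau>. \<bar>G \<tau>\<bar>)"
    proof -
      have cw: "continuous_on {a..s} w"
        by (rule DERIV_continuous_on[of _ _ w1]) (use dw has_field_derivative_at_within in blast)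
      have cw1: "continuous_on {a..s} w1"
        by (rule DERIV_continuous_on[of _ _ w2]) (use dw1 has_field_derivative_at_within in blast)
      have cG: "continuous_on {a..s} G" unfolding G_def using pos a0
        by (intro continuous_intros cw2 cg cw cw1) auto
      then have "0 \<le> integral {a..s} (\<lambda>\<tau>. \<bar>G \<tau>\<bar>)"
        by (intro integral_nonneg integrable_continuous_real continuous_intros) auto
      then show ?thesis by simp
    qed
    have cG: "continuous_on {a..s} G"
    proof -
      have cw: "continuous_on {a..s} w"
        by (rule DERIV_continuous_on[of _ _ w1]) (use dw has_field_derivative_at_within in blast)
      have cw1: "continuous_on {a..s} w1"
        by (rule DERIV_continuous_on[of _ _ w2]) (use dw1 has_field_derivative_at_within in blast)
      show ?thesis unfolding G_def using pos a0
        by (intro continuous_intros cw2 cg cw cw1) auto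
    qed
    show ?thesis using est mult_right_mono[OF ex nn] cG by linarith
  qed
  define SUPV where "SUPV = (SUP q\<in>HypK s0. \<bar>v q\<bar> + absD v q)"
  have bdd: "bdd_above ((\<lambda>q. \<bar>v q\<bar> + absD v q) ` HypK s0)"
    by (rule hyp_bdd[OF C2v KU _ s01 dl vz]) (use s02 in simp)
  have SUPnn: "SUPV \<ge> 0"
  proof -
    have "(s0, 0) \<in> HypK s0" using s02 by (simp add: HypK_def)
    then have "\<bar>v (s0, 0)\<bar> + absD v (s0, 0) \<le> SUPV" unfolding SUPV_def by (rule cSUP_upper[OF _ bdd])
    moreover have "0 \<le> absD v (s0, 0)" using absD_ge(1)[of v "(s0,0)"] by simp
    ultimately show ?thesis by simp
  qed
  define C0 where "C0 = C0c c s0"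
  have C0nn: "C0 \<ge> 0" using s0p c0 by (simp add: C0_def C0c_def)
  obtain a where a: "L0 \<le> a" "lst < a" "a \<le> s"
    and aint: "integral {L0..s} \<Phi> = integral {a..s} (\<lambda>\<tau>. \<bar>G \<tau>\<bar>)"
    and aE: "sqrt ((w1 a)^2 + c^2 * (w a)^2) \<le> (if cond then C0 * SUPV else 0)"
  proof (cases "lst < L0")
    case True
    then have cnd: "cond" and L0s: "L0 = s0" using L0_eq by (auto split: if_splits)
    have s0s: "s0 \<le> s" using tp by simp
    have lst0: "lst < s0" using True L0s by simp
    have int: "integral {L0..s} \<Phi> = integral {s0..s} (\<lambda>\<tau>. \<bar>G \<tau>\<bar>)"
      unfolding L0s by (rule integral_cong) (use PhiG inK lst0 s0p in auto)
    define q0 where "q0 = s0 *\<^sub>R e"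
    have q0K: "q0 \<in> Kreg s0 s1" unfolding q0_def using inK[of s0] s0s lst0 by simp
    have rq: "tco q0 = s0 * t / s" "rco q0 = s0 * r / s" "sco q0 = s0" using rs[of s0] s0p by (auto simp: q0_def)
    have q0H: "q0 \<in> HypK s0"
    proof -
      have sq: "(tco q0)^2 - (rco q0)^2 = s0^2" using sco_sq[of q0] rq s0p by simp
      have tq: "tco q0 = sqrt (s0^2 + (rco q0)^2)"
        by (rule real_sqrt_unique[symmetric]) (use sq rq tp s0p in auto)
      have "rco q0 < tco q0 - 1" using q0K by (cases q0) (auto simp: Kreg_def tco_def rco_def)
      then show ?thesis using tq by (cases q0) (auto simp: HypK_def tco_def rco_def)
    qed
    have vS: "\<bar>v q0\<bar> + absD v q0 \<le> SUPV" unfolding SUPV_def by (rule cSUP_upper[OF q0H bdd])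
    have q0U: "q0 \<in> U" using q0K KU by auto
    have kle: "k \<le> s0"
    proof -
      have "lst = (t + r) / s"
      proof -
        have "s^2 = (t - r) * (t + r)" using tp by (simp add: power2_eq_square algebra_simps)
        then show ?thesis using tr1 tp by (simp add: lst_def field_simps power2_eq_square)
      qed
      moreover have "t / s \<le> (t + r) / s" using tp by (simp add: divide_right_mono)
      ultimately show ?thesis using lst0 unfolding k_def by simp
    qed
    have P1b: "\<bar>P1 s0\<bar> \<le> 4 * s0 * absD v q0"
    proof -
      have "P1 s0 = fst e * dt v q0 + (\<Sum>i\<in>UNIV. snd e $ i * dx i v q0)"
        unfolding P1_def q0_def[symmetric] by (rule pd_lin[OF C2vf(2)[OF q0U]])
      moreover have "fst e = k" by (simp add: e_def k_def t_def tco_def)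
      moreover have "\<bar>snd e $ i\<bar> \<le> k" for i
      proof -
        have "\<bar>xco p $ i\<bar> \<le> r" using component_le_norm_cart[of "xco p" i] by (simp add: r_def rco_def xco_def)
        then have "\<bar>xco p $ i\<bar> / s \<le> t / s" using tp by (intro divide_right_mono) auto
        then show ?thesis using tp by (simp add: e_def k_def xco_def)
      qed
      ultimately have "\<bar>P1 s0\<bar> \<le> k * absD v q0 + (\<Sum>i\<in>(UNIV::3 set). k * absD v q0)"
      proof -
        assume P: "P1 s0 = fst e * dt v q0 + (\<Sum>i\<in>UNIV. snd e $ i * dx i v q0)" and fe: "fst e = k"
          and se: "\<And>i. \<bar>snd e $ i\<bar> \<le> k"
        have "\<bar>P1 s0\<bar> \<le> \<bar>fst e * dt v q0\<bar> + \<bar>\<Sum>i\<in>UNIV. snd e $ i * dx i v q0\<bar>" unfolding P by (rule abs_triangle_ineq)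
        also have "\<dots> \<le> k * absD v q0 + (\<Sum>i\<in>(UNIV::3 set). k * absD v q0)"
        proof (rule add_mono)
          have "\<bar>k\<bar> = k" using kf by simp
          then show "\<bar>fst e * dt v q0\<bar> \<le> k * absD v q0" unfolding fe abs_mult using kf absD_ge(1)[of v q0]
            by (simp add: mult_left_mono)
          have "\<bar>\<Sum>i\<in>UNIV. snd e $ i * dx i v q0\<bar> \<le> (\<Sum>i\<in>UNIV. \<bar>snd e $ i * dx i v q0\<bar>)" by (rule sum_abs)
          also have "\<dots> \<le> (\<Sum>i\<in>(UNIV::3 set). k * absD v q0)"
          proof (rule sum_mono)
            fix i :: 3
            show "\<bar>snd e $ i * dx i v q0\<bar> \<le> k * absD v q0" unfolding abs_mult
              using se[of i] absD_ge(2)[of i v q0] kf by (intro mult_mono) auto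
          qed
          finally show "\<bar>\<Sum>i\<in>UNIV. snd e $ i * dx i v q0\<bar> \<le> (\<Sum>i\<in>(UNIV::3 set). k * absD v q0)" .
        qed
        finally show ?thesis .
      qed
      then have "\<bar>P1 s0\<bar> \<le> 4 * k * absD v q0" by simp
      also have "\<dots> \<le> 4 * s0 * absD v q0" using kle absD_ge(1)[of v q0]
        by (intro mult_right_mono) auto
      finally show ?thesis .
    qed
    have E0: "sqrt ((w1 s0)^2 + c^2 * (w s0)^2) \<le> C0 * SUPV"
    proof -
      define \<sigma>0 where "\<sigma>0 = sqrt s0"
      have pw: "s0 powr (3/2) = s0 * \<sigma>0" "s0 powr (1/2) = \<sigma>0" using powr_facts[OF s0p] by (auto simp: \<sigma>0_def)
      have \<sigma>0p: "\<sigma>0 > 0" using s0p by (simp add: \<sigma>0_def)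
      define V0 where "V0 = \<bar>v q0\<bar>"
      define D0 where "D0 = absD v q0"
      have V0nn: "V0 \<ge> 0" "D0 \<ge> 0" using absD_ge(1)[of v q0] by (auto simp: V0_def D0_def)
      have "sqrt ((w1 s0)^2 + c^2 * (w s0)^2) = sqrt ((w1 s0)^2 + (c * w s0)^2)" by (simp add: power_mult_distrib)
      also have "\<dots> \<le> \<bar>w1 s0\<bar> + \<bar>c * w s0\<bar>" by (rule sqrt_sum_squares_le_sum_abs)
      also have "\<dots> \<le> (3/2 * \<sigma>0 * V0 + s0 * \<sigma>0 * (4 * s0 * D0)) + c * (s0 * \<sigma>0 * V0)"
      proof (rule add_mono)
        have "\<bar>w1 s0\<bar> \<le> \<bar>3/2 * \<sigma>0 * v q0\<bar> + \<bar>s0 * \<sigma>0 * P1 s0\<bar>"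
          unfolding w1_def pw \<phi>_def q0_def[symmetric] by (rule abs_triangle_ineq)
        also have "\<dots> \<le> 3/2 * \<sigma>0 * V0 + s0 * \<sigma>0 * (4 * s0 * D0)"
          using P1b \<sigma>0p s0p unfolding V0_def D0_def abs_mult by (intro add_mono mult_left_mono) auto
        finally show "\<bar>w1 s0\<bar> \<le> 3/2 * \<sigma>0 * V0 + s0 * \<sigma>0 * (4 * s0 * D0)" .
        show "\<bar>c * w s0\<bar> \<le> c * (s0 * \<sigma>0 * V0)"
          unfolding w_def pw \<phi>_def q0_def[symmetric] V0_def abs_mult using c0 s0p \<sigma>0p by simp
      qed
      also have "\<dots> \<le> C0 * (V0 + D0)"
      proof -
        have "3/2 * \<sigma>0 * V0 \<le> 2 * s0 * \<sigma>0 * V0" using s02 \<sigma>0p V0nn by (intro mult_right_mono) auto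
        then show ?thesis unfolding C0_def C0c_def \<sigma>0_def[symmetric] using V0nn s0p \<sigma>0p c0
          by (simp add: algebra_simps) (smt (verit) mult_nonneg_nonneg)
      qed
      also have "\<dots> \<le> C0 * SUPV" using vS C0nn unfolding V0_def D0_def by (intro mult_left_mono) auto
      finally show ?thesis .
    qed
    show ?thesis
    proof (rule that[of s0])
      show "L0 \<le> s0" "lst < s0" "s0 \<le> s" using L0s lst0 s0s by auto
      show "integral {L0..s} \<Phi> = integral {s0..s} (\<lambda>\<tau>. \<bar>G \<tau>\<bar>)" by (rule int)
      show "sqrt ((w1 s0)^2 + c^2 * (w s0)^2) \<le> (if cond then C0 * SUPV else 0)" using E0 cnd by simp
    qed
  next
    case False
    then have L0l: "L0 = lst" using L0f by simp
    define b' where "b' = min ((1+\<delta>)*lst) s"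
    define a where "a = (lst + b') / 2"
    have "lst < (1+\<delta>)*lst" using lpos dl by simp
    then have lb': "lst < b'" "b' \<le> s" using llt by (auto simp: b'_def)
    then have ab: "lst < a" "a < b'" "a \<le> s" by (auto simp: a_def)
    have inKz: "\<tau> *\<^sub>R e \<in> Kreg s0 s1" if "lst < \<tau>" "\<tau> < b'" for \<tau>
      using inK[of \<tau>] that L0l L0f lb' by auto
    have zero: "\<phi> \<tau> = 0" if "lst < \<tau>" "\<tau> < b'" for \<tau>
    proof -
      have \<tau>0: "\<tau> > 0" using that lpos by simp
      have "\<tau> < (1+\<delta>) * (s / (t - r))" using that by (simp add: b'_def lst_def)
      then have "\<tau> * (t - r) < (1+\<delta>) * s" using tr1 by (simp add: field_simps)
      then have "\<tau> * (t - r) / s < 1 + \<delta>" using tp by (simp add: field_simps)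
      moreover have "\<tau> * (t - r) / s = \<tau> * t / s - \<tau> * r / s" by (simp add: algebra_simps diff_divide_distrib)
      ultimately have "rco (\<tau> *\<^sub>R e) > tco (\<tau> *\<^sub>R e) - 1 - \<delta>" unfolding rs(1,2)[OF \<tau>0] by linarith
      then show ?thesis using vz inKz[OF that] unfolding \<phi>_def by auto
    qed
    have inUz: "\<tau> *\<^sub>R e \<in> U" if "lst < \<tau>" "\<tau> < b'" for \<tau> using inKz[OF that] KU by auto
    have P1z: "P1 \<tau> = 0" if "lst < \<tau>" "\<tau> < b'" for \<tau>
      using deriv_local_zero[OF ray_deriv[OF C2vf(2)[OF inUz[OF that]]] that zero[unfolded \<phi>_def]]
      unfolding P1_def by blast
    have P2z: "P2 \<tau> = 0" if "lst < \<tau>" "\<tau> < b'" for \<tau>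
      using deriv_local_zero[OF ray_deriv[OF C2vf(3)[OF inUz[OF that]]] that P1z[unfolded P1_def]]
      unfolding P2_def by blast
    have Gz: "G \<tau> = 0" if "lst < \<tau>" "\<tau> < b'" for \<tau>
      unfolding G_def w_def w1_def w2_def using zero[OF that] P1z[OF that] P2z[OF that] by simp
    have aE0: "w a = 0" "w1 a = 0" unfolding w_def w1_def using zero[OF ab(1,2)] P1z[OF ab(1,2)] by simp_all
    have La: "L0 \<le> a" using L0l ab by simp
    have cGa: "continuous_on {a..s} G" using energy[OF La ab(1,3)] by blast
    have h0: "(\<Phi> has_integral 0) {lst..a}"
    proof (rule has_integral_spike_finite[of "{lst}" _ _ "\<lambda>_. 0"])
      show "\<Phi> x = 0" if "x \<in> {lst..a} - {lst}" for x
      proof -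
        have x: "lst < x" "x < b'" using that ab by auto
        then show ?thesis using PhiG[OF inKz[OF x]] Gz[OF x] lpos by simp
      qed
    qed auto
    have eqa: "\<Phi> x = \<bar>G x\<bar>" if "x \<in> {a..s}" for x
      using PhiG[of x] inK[of x] that ab L0l L0f lpos by auto
    have iA: "\<Phi> integrable_on {a..s}"
      by (rule integrable_eq[OF integrable_continuous_real]) (use cGa eqa in \<open>auto intro: continuous_intros\<close>)
    have iL: "\<Phi> integrable_on {lst..a}" using h0 by blast
    have "integral {lst..a} \<Phi> + integral {a..s} \<Phi> = integral {lst..s} \<Phi>"
      by (rule Henstock_Kurzweil_Integration.integral_combine)
         (use ab Henstock_Kurzweil_Integration.integrable_combine[OF _ _ iL iA] in auto)
    moreover have "integral {lst..a} \<Phi> = 0" using h0 by blast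
    moreover have "integral {a..s} \<Phi> = integral {a..s} (\<lambda>\<tau>. \<bar>G \<tau>\<bar>)" by (rule integral_cong) (rule eqa)
    ultimately have int: "integral {L0..s} \<Phi> = integral {a..s} (\<lambda>\<tau>. \<bar>G \<tau>\<bar>)" using L0l by simp
    show ?thesis
    proof (rule that[of a])
      show "L0 \<le> a" "lst < a" "a \<le> s" using La ab by auto
      show "integral {L0..s} \<Phi> = integral {a..s} (\<lambda>\<tau>. \<bar>G \<tau>\<bar>)" by (rule int)
      show "sqrt ((w1 a)^2 + c^2 * (w a)^2) \<le> (if cond then C0 * SUPV else 0)"
        using aE0 C0nn SUPnn by simp
    qed
  qed
  define I where "I = integral {L0..s} \<Phi>"
  define A1 where "A1 = abs1 v p"
  define \<sigma> where "\<sigma> = s powr (1/2)"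
  define Wt where "Wt = (s / t) powr eta"
  define E where "E = sqrt ((w1 s)^2 + c^2 * (w s)^2)"
  have Wpos: "Wt > 0" using tp by (simp add: Wt_def)
  have \<sigma>nn: "\<sigma> \<ge> 0" by (simp add: \<sigma>_def)
  have A1nn: "A1 \<ge> 0" using abs1_ge(1)[of v p] by (simp add: A1_def)
  obtain en cGa where en: "E \<le> Zc c C_S s0 * (sqrt ((w1 a)^2 + c^2 * (w a)^2) + integral {a..s} (\<lambda>\<tau>. \<bar>G \<tau>\<bar>))"
    and cGa: "continuous_on {a..s} G" using energy[OF a] unfolding E_def by blast
  have Inn: "I \<ge> 0" unfolding I_def aint
    using a by (intro integral_nonneg integrable_continuous_real continuous_intros cGa) auto
  have pe: "s *\<^sub>R e = p" using tp by (simp add: e_def)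
  have pU: "p \<in> U" using pK KU by auto
  have lb: "s powr (3/2) * (\<bar>v p\<bar> + (s / t) * absD v p) \<le> \<bar>w s\<bar> + \<bar>w1 s\<bar> + 6 * \<sigma> * A1"
    using lhs_bound[OF C2vf(2)[OF pU]] pf unfolding w_def w1_def \<phi>_def P1_def pe A1_def \<sigma>_def
    by (simp add: t_def s_def r_def e_def)
  have ww: "\<bar>w s\<bar> + \<bar>w1 s\<bar> \<le> (1 + 1/c) * E"
  proof -
    have e1: "\<bar>w1 s\<bar> \<le> E" unfolding E_def by (rule real_le_rsqrt) (simp add: power2_abs)
    have "c * \<bar>w s\<bar> \<le> E" unfolding E_def
      by (rule real_le_rsqrt) (simp add: power2_abs power_mult_distrib abs_mult c0 less_imp_le)
    then have e2: "\<bar>w s\<bar> \<le> E / c" using c0 by (simp add: field_simps)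
    show ?thesis using e1 e2 by (simp add: algebra_simps)
  qed
  define Y where "Y = (1 + 1/c) * Zc c C_S s0"
  have Ynn: "Y \<ge> 0" using c0 Zpos by (simp add: Y_def)
  have X: "\<bar>w s\<bar> + \<bar>w1 s\<bar> \<le> Y * (sqrt ((w1 a)^2 + c^2 * (w a)^2) + I)"
  proof -
    have "(1 + 1/c) * E \<le> (1 + 1/c) * (Zc c C_S s0 * (sqrt ((w1 a)^2 + c^2 * (w a)^2) + I))"
      using en c0 unfolding I_def aint by (intro mult_left_mono) auto
    then show ?thesis using ww unfolding Y_def by (simp add: mult.assoc)
  qed
  have Cst_eq: "Cst c C_S s0 = Y * (C0 + 1) + 6" by (simp add: Cst_def Y_def C0_def)
  have V_eq: "Vbd s0 eta h v f p = (if cond then Wt * SUPV + Wt * \<sigma> * A1 + Wt * I else Wt * \<sigma> * A1 + Wt * I)"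
    unfolding Vbd_def Let_def cond_def SUPV_def I_def \<Phi>_def L0_def Wt_def \<sigma>_def A1_def s_def t_def by simp
  have core: "s powr (3/2) * (\<bar>v p\<bar> + (s / t) * absD v p) \<le>
     Cst c C_S s0 * (if cond then SUPV + \<sigma> * A1 + I else \<sigma> * A1 + I)"
  proof (cases cond)
    case True
    have "s powr (3/2) * (\<bar>v p\<bar> + (s / t) * absD v p) \<le> Y * (C0 * SUPV + I) + 6 * \<sigma> * A1"
      using lb X aE True mult_left_mono[OF _ Ynn, of "sqrt ((w1 a)^2 + c^2 * (w a)^2) + I" "C0 * SUPV + I"]
      by simp
    also have "\<dots> \<le> Y * (C0 + 1) * (SUPV + I) + 6 * (\<sigma> * A1)"
    proof -
      have "C0 * SUPV + I \<le> (C0 + 1) * (SUPV + I)" using C0nn SUPnn Inn by (simp add: algebra_simps)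
      then show ?thesis using mult_left_mono[OF _ Ynn] by (simp add: mult.assoc)
    qed
    also have "\<dots> \<le> Cst c C_S s0 * (SUPV + \<sigma> * A1 + I)"
    proof -
      have h1: "0 \<le> SUPV + I" "0 \<le> \<sigma> * A1" using SUPnn Inn \<sigma>nn A1nn by auto
      have "Y * (C0 + 1) * (SUPV + I) \<le> Cst c C_S s0 * (SUPV + I)"
        unfolding Cst_eq using h1 by (intro mult_right_mono) auto
      moreover have "6 * (\<sigma> * A1) \<le> Cst c C_S s0 * (\<sigma> * A1)"
        unfolding Cst_eq using h1 Ynn C0nn by (intro mult_right_mono) auto
      ultimately show ?thesis by (simp add: algebra_simps)
    qed
    finally show ?thesis using True by simp
  next
    case False
    have "s powr (3/2) * (\<bar>v p\<bar> + (s / t) * absD v p) \<le> Y * I + 6 * (\<sigma> * A1)"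
    proof -
      have h1: "sqrt ((w1 a)^2 + c^2 * (w a)^2) \<le> 0" using aE False by (simp only: if_False)
      have h2: "sqrt ((w1 a)^2 + c^2 * (w a)^2) \<ge> 0" by simp
      have "sqrt ((w1 a)^2 + c^2 * (w a)^2) = 0" using h1 h2 by linarith
      then show ?thesis using lb X by (simp add: mult.assoc)
    qed
    also have "\<dots> \<le> Cst c C_S s0 * (\<sigma> * A1 + I)"
    proof -
      have h1: "0 \<le> \<sigma> * A1" using \<sigma>nn A1nn by auto
      have "Y * I \<le> Cst c C_S s0 * I"
        unfolding Cst_eq using Inn Ynn C0nn by (intro mult_right_mono) (auto simp: algebra_simps)
      moreover have "6 * (\<sigma> * A1) \<le> Cst c C_S s0 * (\<sigma> * A1)"
        unfolding Cst_eq using h1 Ynn C0nn by (intro mult_right_mono) auto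
      ultimately show ?thesis by (simp add: algebra_simps)
    qed
    finally show ?thesis using False by simp
  qed
  have "Wt * (s powr (3/2) * (\<bar>v p\<bar> + (s / t) * absD v p)) \<le>
     Wt * (Cst c C_S s0 * (if cond then SUPV + \<sigma> * A1 + I else \<sigma> * A1 + I))"
    using core Wpos by (intro mult_left_mono) auto
  also have "\<dots> = Cst c C_S s0 * Vbd s0 eta h v f p" unfolding V_eq by (simp add: algebra_simps)
  finally show ?thesis unfolding Wt_def s_def t_def by (simp add: mult.assoc)
qed

theorem proposition3p4:
  fixes c C_S s0 :: real
  assumes "c > 0" and "s0 \<ge> 2"
  shows "\<exists>C. \<forall>(s1::real) (eta::real) (h::pt \<Rightarrow> real) (v::pt \<Rightarrow> real) (f::pt \<Rightarrow> real)
              (S::pt \<Rightarrow> real) (U::pt set).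
     s1 > s0
     \<and> Kreg s0 s1 \<subseteq> U \<and> C2_on U v \<and> C2_on U h
     \<and> (\<exists>\<delta>>0. \<forall>p\<in>Kreg s0 s1. rco p > tco p - 1 - \<delta> \<longrightarrow> v p = 0)
     \<and> (\<forall>p\<in>Kreg s0 s1. box v p - h p * dt v p + c^2 * v p = f p)
     \<and> (\<forall>p\<in>Kreg s0 s1. \<bar>(tco p / sco p) * h p\<bar> \<le> c)
     \<and> (\<forall>p\<in>Kreg s0 s1. S p + (tco p / sco p) * h p \<le> 0)
     \<and> (\<forall>p\<in>Kreg s0 s1. (\<lambda>l. \<bar>S (gam p l)\<bar>) integrable_on {lam0 s0 p .. s1}
            \<and> integral {lam0 s0 p .. s1} (\<lambda>l. \<bar>S (gam p l)\<bar>) \<le> C_S)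
     \<longrightarrow> (\<forall>p\<in>Kreg s0 s1.
            (sco p / tco p) powr eta * sco p powr (3/2)
              * (\<bar>v p\<bar> + (sco p / tco p) * absD v p)
            \<le> C * Vbd s0 eta h v f p)"
proof -
  show ?thesis
  proof (rule exI[of _ "Cst c C_S s0"], intro allI impI ballI)
    fix s1 eta :: real and h v f S :: "pt \<Rightarrow> real" and U :: "pt set" and p :: pt
    assume H: "s1 > s0
     \<and> Kreg s0 s1 \<subseteq> U \<and> C2_on U v \<and> C2_on U h
     \<and> (\<exists>\<delta>>0. \<forall>p\<in>Kreg s0 s1. rco p > tco p - 1 - \<delta> \<longrightarrow> v p = 0)
     \<and> (\<forall>p\<in>Kreg s0 s1. box v p - h p * dt v p + c^2 * v p = f p)
     \<and> (\<forall>p\<in>Kreg s0 s1. \<bar>(tco p / sco p) * h p\<bar> \<le> c)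
     \<and> (\<forall>p\<in>Kreg s0 s1. S p + (tco p / sco p) * h p \<le> 0)
     \<and> (\<forall>p\<in>Kreg s0 s1. (\<lambda>l. \<bar>S (gam p l)\<bar>) integrable_on {lam0 s0 p .. s1}
            \<and> integral {lam0 s0 p .. s1} (\<lambda>l. \<bar>S (gam p l)\<bar>) \<le> C_S)"
      and p: "p \<in> Kreg s0 s1"
    from H obtain \<delta> where dl: "\<delta> > 0" and vz: "\<forall>p\<in>Kreg s0 s1. rco p > tco p - 1 - \<delta> \<longrightarrow> v p = 0"
      by blast
    show "(sco p / tco p) powr eta * sco p powr (3/2) * (\<bar>v p\<bar> + (sco p / tco p) * absD v p)
            \<le> Cst c C_S s0 * Vbd s0 eta h v f p"
      by (rule main_point[where U=U, OF assms(1,2) _ _ _ _ dl vz]) (use H p in auto)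
  qed
qed

end
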